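(* Consider the following cooperative multi-player multi-armed bandit problem ("Problem A"). There are $M$ players $P_1,\dots,P_M$; player $P_i$ has a finite set $\mathcal{K}_i=\{1,\dots,K_i\}$ of arms. At each round $t=1,2,\dots,T$ each player $P_i$ picks an arm $a_i(t)\in\mathcal{K}_i$, giving the arm-tuple $a(t)=(a_1(t),\dots,a_M(t))\in\mathcal{K}_1\times\cdots\times\mathcal{K}_M$. For each arm-tuple $a$ there is an unknown $1$-subgaussian distribution $F_a$ supported in $[0,1]$ with mean $\mu_a$; when $a(t)$ is played, a reward $X_{a(t)}(t)\sim F_{a(t)}$ is drawn, independently across rounds, and this same (common) reward is observed by all players. No player observes the arms chosen by the other players, and players cannot communicate during play (they may agree on a protocol beforehand). Let $\mu^*=\max_a\mu_a$, $\Delta_a=\mu^*-\mu_a$, and define the expected regret $R_T=\mathbb{E}\big[T\mu^*-\sum_{t=1}^T X_{a(t)}(t)\big]$. Suppose every player runs the \texttt{mUCB} algorithm: in the first $K_{\max}=K_1\cdots K_M$ rounds, player $P_i$ starts at its arm $1$ and successively pulls each of its arms $K_{i+1}\cdots K_M$ consecutive times before moving to its next arm, repeating this whole epoch $K_1\cdots K_{i-1}$ times (so that every arm-tuple is played exactly once, and every player knows which tuple produced each reward). For $t>K_{\max}$, every player computes for each arm-tuple $a$ the index $$\eta_a(t)=\begin{cases}\infty,& n_a(t)=0,\\ \hat\mu_a(t)+\sqrt{\dfrac{2\log(1/\delta)}{n_a(t)}},&\text{otherwise},\end{cases}$$ where $n_a(t)$ is the number of rounds among the first $t$ in which tuple $a$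 was played, $\hat\mu_a(t)$ is the average of the rewards received from tuple $a$ in those rounds, and $\delta=1/t^2$; player $P_i$ then plays the $i$-th component of a tuple maximizing $\eta_a(t)$, where ties between maximizing tuples are broken in favour of the lexicographically smallest tuple (i.e. $(x_1,\dots,x_M)<(y_1,\dots,y_M)$ iff there is $n$ with $x_j=y_j$ for all $j<n$ and $x_n<y_n$). Then the expected regret satisfies $$R_T\le 3\sum_a\Delta_a+\sum_{a:\,\Delta_a>0}\frac{(6+4\sqrt2)\log T}{\Delta_a}.$$
   Context: Arms-tuples $a$ range over $\mathcal{K}_1\times\cdots\times\mathcal{K}_M$. Because all players see the same rewards and follow the same deterministic rule, each can compute the tuple chosen at every round even though actions of others are not observed. *)

theory Defs
  imports "HOL-Probability.Probability"
begin

text \<open>Players are indexed 0..M-1 (paper: P_1..P_M); player i has arms {1..K i}.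
  Arm tuples are lists of length M.\<close>

definition arm_tuples :: "nat \<Rightarrow> (nat \<Rightarrow> nat) \<Rightarrow> nat list set" where
  "arm_tuples M K = {a. length a = M \<and> (\<forall>i<M. 1 \<le> a ! i \<and> a ! i \<le> K i)}"

definition Kmax :: "nat \<Rightarrow> (nat \<Rightarrow> nat) \<Rightarrow> nat" where
  "Kmax M K = (\<Prod>i<M. K i)"

definition lex_less :: "nat \<Rightarrow> nat list \<Rightarrow> nat list \<Rightarrow> bool" where
  "lex_less M x y = (\<exists>n<M. (\<forall>j<n. x ! j = y ! j) \<and> x ! n < y ! n)"

text \<open>Initial phase: arm of player i at round t (1-based, t \<le> Kmax): player i
  pulls each of its arms K_(i+1)...K_M consecutive times, starting from arm 1,
  and repeats this epoch.\<close>
definition init_arm :: "nat \<Rightarrow> (nat \<Rightarrow> nat) \<Rightarrow> nat \<Rightarrow> nat \<Rightarrow> nat" where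
  "init_arm M K i t = ((t - 1) div (\<Prod>j\<in>{i<..<M}. K j)) mod K i + 1"

definition n_count :: "(nat list \<times> real) list \<Rightarrow> nat list \<Rightarrow> nat" where
  "n_count h a = length (filter (\<lambda>p. fst p = a) h)"

definition mu_hat :: "(nat list \<times> real) list \<Rightarrow> nat list \<Rightarrow> real" where
  "mu_hat h a = sum_list (map snd (filter (\<lambda>p. fst p = a) h)) / real (n_count h a)"

definition ucb_index :: "(nat list \<times> real) list \<Rightarrow> nat list \<Rightarrow> ereal" where
  "ucb_index h a =
     (let t = length h; \<delta> = 1 / (real t)^2 in
      if n_count h a = 0 then \<infinity>
      else ereal (mu_hat h a + sqrt (2 * ln (1 / \<delta>) / real (n_count h a))))"

text \<open>Joint choice for the next round t+1, given the history of the first t rounds: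
  the initial round-robin while t < Kmax, afterwards the lexicographically
  smallest maximiser of the UCB index.\<close>
definition mucb_choice :: "nat \<Rightarrow> (nat \<Rightarrow> nat) \<Rightarrow> (nat list \<times> real) list \<Rightarrow> nat list" where
  "mucb_choice M K h =
     (let t = length h in
      if t < Kmax M K then map (\<lambda>i. init_arm M K i (t + 1)) [0..<M]
      else (THE a. a \<in> arm_tuples M K
               \<and> ucb_index h a = Max (ucb_index h ` arm_tuples M K)
               \<and> (\<forall>b\<in>arm_tuples M K. ucb_index h b = Max (ucb_index h ` arm_tuples M K)
                      \<longrightarrow> a = b \<or> lex_less M a b)))"

text \<open>Reconstruction (by each player) of the tuples played in rounds 1..s from the
  observed common rewards rs (the reward of round s+1 is rs ! s).\<close>
primrec tuples_of :: "nat \<Rightarrow> (nat \<Rightarrow> nat) \<Rightarrow> nat \<Rightarrow> real list \<Rightarrow> nat list list" where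
  "tuples_of M K 0 rs = []"
| "tuples_of M K (Suc s) rs =
     tuples_of M K s rs @ [mucb_choice M K (zip (tuples_of M K s rs) (take s rs))]"

text \<open>Arm played by player i in the next round, given only the list rs of common
  rewards observed so far.\<close>
definition player_arm :: "nat \<Rightarrow> (nat \<Rightarrow> nat) \<Rightarrow> nat \<Rightarrow> real list \<Rightarrow> nat" where
  "player_arm M K i rs = mucb_choice M K (zip (tuples_of M K (length rs) rs) rs) ! i"

text \<open>Realised play: rewards X a t \<omega> for tuple a at round t (t \<ge> 1).
  rewards_upto t = list of common rewards in rounds 1..t;
  played t = tuple formed by the players' arms at round t.\<close>
primrec rewards_upto ::
  "nat \<Rightarrow> (nat \<Rightarrow> nat) \<Rightarrow> (nat list \<Rightarrow> nat \<Rightarrow> 'w \<Rightarrow> real) \<Rightarrow> 'w \<Rightarrow> nat \<Rightarrow> real list" where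
  "rewards_upto M K X \<omega> 0 = []"
| "rewards_upto M K X \<omega> (Suc t) =
     (let rs = rewards_upto M K X \<omega> t
      in rs @ [X (map (\<lambda>i. player_arm M K i rs) [0..<M]) (Suc t) \<omega>])"

definition played ::
  "nat \<Rightarrow> (nat \<Rightarrow> nat) \<Rightarrow> (nat list \<Rightarrow> nat \<Rightarrow> 'w \<Rightarrow> real) \<Rightarrow> 'w \<Rightarrow> nat \<Rightarrow> nat list" where
  "played M K X \<omega> t = map (\<lambda>i. player_arm M K i (rewards_upto M K X \<omega> (t - 1))) [0..<M]"

definition subgaussian :: "real \<Rightarrow> real measure \<Rightarrow> bool" where
  "subgaussian \<sigma> F =
     (\<forall>l::real. integrable F (\<lambda>x. exp (l * (x - integral\<^sup>L F (\<lambda>x. x))))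
       \<and> integral\<^sup>L F (\<lambda>x. exp (l * (x - integral\<^sup>L F (\<lambda>x. x)))) \<le> exp (l^2 * \<sigma>^2 / 2))"

end

theory Submission
  imports Defs
begin

section \<open>Lexicographic order\<close>

lemma lex_less_irrefl: "\<not> lex_less M x x"
  by (auto simp: lex_less_def)

lemma lex_less_asym: "lex_less M x y \<Longrightarrow> \<not> lex_less M y x"
  unfolding lex_less_def
proof (elim exE conjE, rule notI, elim exE conjE)
  fix n1 n2
  assume 1: "n1 < M" "\<forall>j<n1. x ! j = y ! j" "x ! n1 < y ! n1"
     and 2: "n2 < M" "\<forall>j<n2. y ! j = x ! j" "y ! n2 < x ! n2"
  show False
  proof (cases n1 n2 rule: linorder_cases)
    case less then show ?thesis using 1 2 by auto
  next
    case equal then show ?thesis using 1 2 by auto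
  next
    case greater then show ?thesis using 1 2 by auto
  qed
qed

lemma lex_less_trans: "lex_less M x y \<Longrightarrow> lex_less M y z \<Longrightarrow> lex_less M x z"
  unfolding lex_less_def
proof (elim exE conjE)
  fix n1 n2
  assume 1: "n1 < M" "\<forall>j<n1. x ! j = y ! j" "x ! n1 < y ! n1"
     and 2: "n2 < M" "\<forall>j<n2. y ! j = z ! j" "y ! n2 < z ! n2"
  show "\<exists>n<M. (\<forall>j<n. x ! j = z ! j) \<and> x ! n < z ! n"
  proof (cases n1 n2 rule: linorder_cases)
    case less then show ?thesis using 1 2 by (intro exI[of _ n1]) auto
  next
    case equal then show ?thesis using 1 2 by (intro exI[of _ n1]) auto
  next
    case greater then show ?thesis using 1 2 by (intro exI[of _ n2]) auto
  qed
qed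

lemma lex_less_total:
  assumes "length x = M" "length y = M" "x \<noteq> y"
  shows "lex_less M x y \<or> lex_less M y x"
proof -
  have "\<exists>j<M. x ! j \<noteq> y ! j"
  proof (rule ccontr)
    assume "\<not> (\<exists>j<M. x ! j \<noteq> y ! j)"
    then have "x = y" using assms(1,2) by (intro nth_equalityI) auto
    then show False using assms(3) by simp
  qed
  then obtain j where j: "j < M" "x ! j \<noteq> y ! j" by blast
  define n where "n = (LEAST j. j < M \<and> x ! j \<noteq> y ! j)"
  have jj: "j < M \<and> x ! j \<noteq> y ! j" using j by simp
  have n: "n < M" "x ! n \<noteq> y ! n" using LeastI[of "\<lambda>j. j < M \<and> x ! j \<noteq> y ! j", OF jj]
    unfolding n_def by auto
  have lt: "\<forall>i<n. x ! i = y ! i"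
  proof (intro allI impI)
    fix i assume i: "i < n"
    have "\<not> (i < M \<and> x ! i \<noteq> y ! i)"
      using not_less_Least[of i "\<lambda>j. j < M \<and> x ! j \<noteq> y ! j"] i unfolding n_def by blast
    then show "x ! i = y ! i" using i n(1) by simp
  qed
  show ?thesis
  proof (cases "x ! n < y ! n")
    case True then show ?thesis using n lt unfolding lex_less_def by blast
  next
    case False then have "y ! n < x ! n" using n by simp
    moreover have "\<forall>i<n. y ! i = x ! i" using lt by simp
    ultimately have "lex_less M y x" using n unfolding lex_less_def by blast
    then show ?thesis by simp
  qed
qed

lemma lex_min_exists:
  assumes "finite S" "S \<noteq> {}" "\<forall>a\<in>S. length a = M"
  shows "\<exists>a\<in>S. \<forall>b\<in>S. a = b \<or> lex_less M a b"
  using assms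
proof (induction S rule: finite_ne_induct)
  case (singleton x) then show ?case by auto
next
  case (insert x S)
  then obtain a where a: "a \<in> S" "\<forall>b\<in>S. a = b \<or> lex_less M a b" by auto
  show ?case
  proof (cases "lex_less M x a")
    case True
    have "\<forall>b\<in>insert x S. x = b \<or> lex_less M x b"
    proof
      fix b assume "b \<in> insert x S"
      then have "b = x \<or> b \<in> S" by simp
      then show "x = b \<or> lex_less M x b"
      proof
        assume "b \<in> S"
        then have "a = b \<or> lex_less M a b" using a by blast
        then show ?thesis using True lex_less_trans[of M x a b] by blast
      qed simp
    qed
    then show ?thesis by blast
  next
    case False
    then have "x = a \<or> lex_less M a x" using lex_less_total[of a M x] a insert.prems by auto
    then show ?thesis using a by auto
  qed
qed

section \<open>Arm tuples\<close>

lemma arm_tuples_length: "a \<in> arm_tuples M K \<Longrightarrow> length a = M"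
  by (simp add: arm_tuples_def)

lemma arm_tuples_finite: "finite (arm_tuples M K)"
proof -
  have "arm_tuples M K \<subseteq> {xs. set xs \<subseteq> {0..Max (K ` {..<M})} \<and> length xs = M}"
  proof
    fix a assume a: "a \<in> arm_tuples M K"
    have "\<forall>x\<in>set a. x \<le> Max (K ` {..<M})"
    proof
      fix x assume "x \<in> set a"
      then obtain i where "i < length a" "a ! i = x" by (auto simp: in_set_conv_nth)
      moreover have "length a = M" "\<forall>i<M. a ! i \<le> K i" using a by (auto simp: arm_tuples_def)
      ultimately have "x \<le> K i" "i < M" by auto
      moreover have "K i \<le> Max (K ` {..<M})" using \<open>i < M\<close> by (intro Max_ge) auto
      ultimately show "x \<le> Max (K ` {..<M})" by linarith
    qed
    then show "a \<in> {xs. set xs \<subseteq> {0..Max (K ` {..<M})} \<and> length xs = M}"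
      using a by (auto simp: arm_tuples_def)
  qed
  moreover have "finite {xs. set xs \<subseteq> {0..Max (K ` {..<M})} \<and> length xs = M}"
    by (rule finite_lists_length_eq) simp
  ultimately show ?thesis by (rule finite_subset)
qed

lemma init_tuple_in:
  assumes "\<forall>i<M. K i \<ge> 1"
  shows "map (\<lambda>i. init_arm M K i t) [0..<M] \<in> arm_tuples M K"
  using assms by (auto simp: arm_tuples_def init_arm_def Suc_le_eq)

lemma arm_tuples_ne:
  assumes "\<forall>i<M. K i \<ge> 1" shows "arm_tuples M K \<noteq> {}"
  using init_tuple_in[OF assms] by blast

section \<open>Choice\<close>

definition pick :: "nat \<Rightarrow> (nat \<Rightarrow> nat) \<Rightarrow> (nat list \<Rightarrow> ereal) \<Rightarrow> nat list" where
  "pick M K f = (THE a. a \<in> arm_tuples M K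
               \<and> f a = Max (f ` arm_tuples M K)
               \<and> (\<forall>b\<in>arm_tuples M K. f b = Max (f ` arm_tuples M K)
                      \<longrightarrow> a = b \<or> lex_less M a b))"

lemma pick_char:
  assumes K: "\<forall>i<M. K i \<ge> 1" and b: "b \<in> arm_tuples M K"
  shows "pick M K f = b \<longleftrightarrow>
     ((\<forall>c\<in>arm_tuples M K. f c \<le> f b) \<and> (\<forall>c\<in>arm_tuples M K. lex_less M c b \<longrightarrow> f c < f b))"
proof -
  let ?A = "arm_tuples M K"
  let ?m = "Max (f ` ?A)"
  let ?P = "\<lambda>a. a \<in> ?A \<and> f a = ?m \<and> (\<forall>b\<in>?A. f b = ?m \<longrightarrow> a = b \<or> lex_less M a b)"
  have fin: "finite ?A" and ne: "?A \<noteq> {}" using arm_tuples_finite arm_tuples_ne[OF K] by auto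
  have "?m \<in> f ` ?A" by (rule Max_in) (use fin ne in auto)
  then have S: "finite {a\<in>?A. f a = ?m}" "{a\<in>?A. f a = ?m} \<noteq> {}"
    using fin by auto
  obtain a where a: "a \<in> {a\<in>?A. f a = ?m}" "\<forall>b\<in>{a\<in>?A. f a = ?m}. a = b \<or> lex_less M a b"
  proof -
    have "\<forall>a\<in>{a\<in>?A. f a = ?m}. length a = M" using arm_tuples_length by auto
    from lex_min_exists[OF S this] show ?thesis using that by blast
  qed
  have Pa: "?P a" using a by auto
  have uniq: "\<And>y. ?P y \<Longrightarrow> y = a"
  proof -
    fix y assume Py: "?P y"
    have "y = a \<or> lex_less M y a" using Py Pa by blast
    moreover have "a = y \<or> lex_less M a y" using Py Pa by blast
    ultimately show "y = a" using lex_less_asym by blast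
  qed
  have the: "pick M K f = a" unfolding pick_def using Pa uniq by (rule the_equality)
  have le: "\<And>c. c \<in> ?A \<Longrightarrow> f c \<le> ?m" using fin by auto
  show ?thesis
  proof
    assume "pick M K f = b"
    then have "b = a" using the by simp
    show "(\<forall>c\<in>?A. f c \<le> f b) \<and> (\<forall>c\<in>?A. lex_less M c b \<longrightarrow> f c < f b)"
    proof (intro conjI ballI impI)
      fix c assume "c \<in> ?A" then show "f c \<le> f b" using le Pa \<open>b = a\<close> by simp
    next
      fix c assume c: "c \<in> ?A" "lex_less M c b"
      have "f c \<noteq> f b"
      proof
        assume "f c = f b"
        then have "a = c \<or> lex_less M a c" using Pa c \<open>b = a\<close> by simp
        then show False using c \<open>b = a\<close> lex_less_irrefl lex_less_asym by blast
      qed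
      then show "f c < f b" using le[OF c(1)] Pa \<open>b = a\<close> by simp
    qed
  next
    assume H: "(\<forall>c\<in>?A. f c \<le> f b) \<and> (\<forall>c\<in>?A. lex_less M c b \<longrightarrow> f c < f b)"
    obtain c where c: "c \<in> ?A" "f c = ?m" using \<open>?m \<in> f ` ?A\<close> by auto
    have fb: "f b = ?m" using H b le[OF b] c by (metis antisym)
    have "?P b"
    proof (intro conjI ballI impI)
      fix c assume c: "c \<in> ?A" "f c = ?m"
      show "b = c \<or> lex_less M b c"
      proof (rule ccontr)
        assume nb: "\<not> (b = c \<or> lex_less M b c)"
        then have "lex_less M c b" using lex_less_total[of b M c] c b arm_tuples_length by blast
        then have "f c < f b" using H c by blast
        then show False using c fb by simp
      qed
    qed (use b fb in auto)
    then show "pick M K f = b" using uniq the by simp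
  qed
qed

lemma pick_in:
  assumes K: "\<forall>i<M. K i \<ge> 1"
  shows "pick M K f \<in> arm_tuples M K"
proof -
  let ?A = "arm_tuples M K"
  let ?m = "Max (f ` ?A)"
  have fin: "finite ?A" and ne: "?A \<noteq> {}" using arm_tuples_finite arm_tuples_ne[OF K] by auto
  have "?m \<in> f ` ?A" by (rule Max_in) (use fin ne in auto)
  then have S: "finite {a\<in>?A. f a = ?m}" "{a\<in>?A. f a = ?m} \<noteq> {}"
    using fin by auto
  obtain a where a: "a \<in> {a\<in>?A. f a = ?m}" "\<forall>b\<in>{a\<in>?A. f a = ?m}. a = b \<or> lex_less M a b"
  proof -
    have "\<forall>a\<in>{a\<in>?A. f a = ?m}. length a = M" using arm_tuples_length by auto
    from lex_min_exists[OF S this] show ?thesis using that by blast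
  qed
  have Pa: "a \<in> ?A \<and> f a = ?m \<and> (\<forall>b\<in>?A. f b = ?m \<longrightarrow> a = b \<or> lex_less M a b)"
    using a by auto
  have "pick M K f = a" unfolding pick_def
  proof (rule the_equality)
    show "a \<in> ?A \<and> f a = ?m \<and> (\<forall>b\<in>?A. f b = ?m \<longrightarrow> a = b \<or> lex_less M a b)" by (rule Pa)
  next
    fix y assume Py: "y \<in> ?A \<and> f y = ?m \<and> (\<forall>b\<in>?A. f b = ?m \<longrightarrow> y = b \<or> lex_less M y b)"
    have "y = a \<or> lex_less M y a" using Py Pa by blast
    moreover have "a = y \<or> lex_less M a y" using Py Pa by blast
    ultimately show "y = a" using lex_less_asym by blast
  qed
  then show ?thesis using a by simp
qed



locale mucb =
  fixes M :: nat and K :: "nat \<Rightarrow> nat"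
  assumes K_pos: "\<forall>i<M. K i \<ge> 1"
begin

abbreviation "A \<equiv> arm_tuples M K"

lemma A_finite: "finite A" by (rule arm_tuples_finite)
lemma A_ne: "A \<noteq> {}" by (rule arm_tuples_ne[OF K_pos])

definition prw :: "(nat \<Rightarrow> nat list \<Rightarrow> real) \<Rightarrow> nat \<Rightarrow> real list" where
  "prw x t = rewards_upto M K (\<lambda>a s _. x s a) () t"

definition pch :: "(nat \<Rightarrow> nat list \<Rightarrow> real) \<Rightarrow> nat \<Rightarrow> nat list" where
  "pch x t = played M K (\<lambda>a s _. x s a) () t"

definition idx :: "nat \<Rightarrow> real \<Rightarrow> real \<Rightarrow> ereal" where
  "idx t n s = (if n = 0 then \<infinity> else ereal (s / n + sqrt (2 * ln (1 / (1 / (real t)^2)) / n)))"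

definition chs :: "nat \<Rightarrow> (nat list \<Rightarrow> ereal) \<Rightarrow> nat list" where
  "chs t f = (if t < Kmax M K then map (\<lambda>i. init_arm M K i (t + 1)) [0..<M] else pick M K f)"

definition cnt :: "(nat \<Rightarrow> nat list \<Rightarrow> real) \<Rightarrow> nat \<Rightarrow> nat list \<Rightarrow> real" where
  "cnt x t a = (\<Sum>s=1..t. if pch x s = a then 1 else 0)"

definition ssum :: "(nat \<Rightarrow> nat list \<Rightarrow> real) \<Rightarrow> nat \<Rightarrow> nat list \<Rightarrow> real" where
  "ssum x t a = (\<Sum>s=1..t. if pch x s = a then x s a else 0)"

lemma choose_in: "chs t f \<in> A"
  unfolding chs_def using init_tuple_in[OF K_pos] pick_in[OF K_pos] by auto

lemma mucb_choice_eq: "mucb_choice M K h = chs (length h) (ucb_index h)"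
  unfolding mucb_choice_def chs_def pick_def Let_def by simp

lemma mucb_choice_in: "mucb_choice M K h \<in> A"
  using choose_in mucb_choice_eq by simp

lemma map_nth_M: "c \<in> A \<Longrightarrow> map (\<lambda>i. c ! i) [0..<M] = c"
  using arm_tuples_length map_nth by metis

lemma map_player_arm: "map (\<lambda>i. player_arm M K i rs) [0..<M] = mucb_choice M K (zip (tuples_of M K (length rs) rs) rs)"
  unfolding player_arm_def using map_nth_M[OF mucb_choice_in] .

lemma ucb_index_eq:
  "ucb_index h a = idx (length h) (real (n_count h a)) (sum_list (map snd (filter (\<lambda>p. fst p = a) h)))"
  unfolding ucb_index_def idx_def mu_hat_def Let_def by simp

lemma prw_Suc: "prw x (Suc t) = prw x t @ [x (Suc t) (mucb_choice M K (zip (tuples_of M K (length (prw x t)) (prw x t)) (prw x t)))]"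
  unfolding prw_def by (simp add: Let_def map_player_arm)

lemma length_prw[simp]: "length (prw x t) = t"
  by (induction t) (simp_all add: prw_Suc, simp add: prw_def)

lemma pch_eq: "pch x t = mucb_choice M K (zip (tuples_of M K (t - 1) (prw x (t - 1))) (prw x (t - 1)))"
  unfolding pch_def played_def prw_def[symmetric] using map_player_arm[of "prw x (t - 1)"] by simp

lemma pch_in: "pch x t \<in> A"
  unfolding pch_eq by (rule mucb_choice_in)

lemma tuples_of_append: "s \<le> length rs \<Longrightarrow> tuples_of M K s (rs @ ys) = tuples_of M K s rs"
  by (induction s) auto

lemma tuples_of_prw: "tuples_of M K t (prw x t) = map (\<lambda>s. pch x (Suc s)) [0..<t]"
proof (induction t)
  case 0 then show ?case by simp
next
  case (Suc t)
  have eq1: "tuples_of M K t (prw x (Suc t)) = tuples_of M K t (prw x t)"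
    by (simp add: prw_Suc tuples_of_append)
  have eq2: "take t (prw x (Suc t)) = prw x t" by (simp add: prw_Suc)
  have eq3: "pch x (Suc t) = mucb_choice M K (zip (tuples_of M K t (prw x t)) (prw x t))"
    by (simp add: pch_eq)
  have "tuples_of M K (Suc t) (prw x (Suc t)) = tuples_of M K t (prw x (Suc t)) @
      [mucb_choice M K (zip (tuples_of M K t (prw x (Suc t))) (take t (prw x (Suc t))))]" by simp
  also have "\<dots> = map (\<lambda>s. pch x (Suc s)) [0..<t] @ [pch x (Suc t)]"
    unfolding eq1 eq2 eq3 Suc.IH ..
  also have "\<dots> = map (\<lambda>s. pch x (Suc s)) [0..<Suc t]" by simp
  finally show ?case .
qed

lemma prw_eq: "prw x t = map (\<lambda>s. x (Suc s) (pch x (Suc s))) [0..<t]"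
proof (induction t)
  case 0 then show ?case by (simp add: prw_def)
next
  case (Suc t)
  then show ?case by (simp add: prw_Suc pch_eq)
qed

definition hist :: "(nat \<Rightarrow> nat list \<Rightarrow> real) \<Rightarrow> nat \<Rightarrow> (nat list \<times> real) list" where
  "hist x t = zip (tuples_of M K t (prw x t)) (prw x t)"

lemma hist_eq: "hist x t = map (\<lambda>s. (pch x (Suc s), x (Suc s) (pch x (Suc s)))) [0..<t]"
proof -
  have "hist x t = zip (map (\<lambda>s. pch x (Suc s)) [0..<t]) (prw x t)"
    unfolding hist_def tuples_of_prw ..
  also have "\<dots> = zip (map (\<lambda>s. pch x (Suc s)) [0..<t]) (map (\<lambda>s. x (Suc s) (pch x (Suc s))) [0..<t])"
    unfolding prw_eq ..
  also have "\<dots> = map (\<lambda>s. (pch x (Suc s), x (Suc s) (pch x (Suc s)))) [0..<t]"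
    by (simp add: zip_map_map zip_same_conv_map comp_def)
  finally show ?thesis .
qed

lemma length_hist[simp]: "length (hist x t) = t"
  by (simp add: hist_eq)

lemma pch_Suc_hist: "pch x (Suc t) = mucb_choice M K (hist x t)"
  unfolding pch_eq hist_def by simp

lemma n_count_hist: "real (n_count (hist x t) a) = cnt x t a"
proof (induction t)
  case 0 then show ?case by (simp add: hist_eq n_count_def cnt_def)
next
  case (Suc t)
  have "hist x (Suc t) = hist x t @ [(pch x (Suc t), x (Suc t) (pch x (Suc t)))]"
    by (simp add: hist_eq)
  then show ?case using Suc by (simp add: n_count_def cnt_def)
qed

lemma sum_hist: "sum_list (map snd (filter (\<lambda>p. fst p = a) (hist x t))) = ssum x t a"
proof (induction t)
  case 0 then show ?case by (simp add: hist_eq ssum_def)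
next
  case (Suc t)
  have "hist x (Suc t) = hist x t @ [(pch x (Suc t), x (Suc t) (pch x (Suc t)))]"
    by (simp add: hist_eq)
  then show ?case using Suc by (auto simp: ssum_def)
qed

lemma pch_Suc: "pch x (Suc t) = chs t (\<lambda>a. idx t (cnt x t a) (ssum x t a))"
proof -
  have "pch x (Suc t) = chs (length (hist x t)) (ucb_index (hist x t))"
    by (simp add: pch_Suc_hist mucb_choice_eq)
  also have "ucb_index (hist x t) = (\<lambda>a. idx t (cnt x t a) (ssum x t a))"
    by (rule ext) (simp only: ucb_index_eq n_count_hist sum_hist length_hist)
  also have "length (hist x t) = t" by simp
  finally show ?thesis .
qed

lemma pch_0: "pch x 0 = pch y 0"
  by (simp add: pch_eq prw_def)

lemma pch_cong:
  "(\<And>s a. 1 \<le> s \<Longrightarrow> s < t \<Longrightarrow> a \<in> A \<Longrightarrow> x s a = y s a) \<Longrightarrow> pch x t = pch y t"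
proof (induction t rule: less_induct)
  case (less t)
  show ?case
  proof (cases t)
    case 0 then show ?thesis by (simp add: pch_0)
  next
    case (Suc t')
    have IH: "pch x s = pch y s" if "s \<le> t'" for s
      using less.IH[of s] less.prems that Suc by auto
    have c: "cnt x t' a = cnt y t' a" for a
      unfolding cnt_def by (intro sum.cong) (auto simp: IH)
    have s: "ssum x t' a = ssum y t' a" for a
    proof -
      have "(if pch x s = a then x s a else 0) = (if pch y s = a then y s a else 0)"
        if "s \<in> {1..t'}" for s
        using that IH[of s] less.prems[of s "pch y s"] pch_in[of y s] Suc by auto
      then show ?thesis unfolding ssum_def by (rule sum.cong[OF refl])
    qed
    show ?thesis unfolding Suc pch_Suc c s ..
  qed
qed

end


context mucb begin

definition Om :: "nat set \<Rightarrow> (nat \<Rightarrow> nat list \<Rightarrow> real) measure" where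
  "Om I = PiM I (\<lambda>_. PiM A (\<lambda>_. borel))"

lemma coord_meas: "s \<in> I \<Longrightarrow> a \<in> A \<Longrightarrow> (\<lambda>x. x s a) \<in> borel_measurable (Om I)"
  unfolding Om_def
  using measurable_compose[OF measurable_component_singleton[of s I] measurable_component_singleton[of a A]]
  by simp

lemma idx_meas:
  assumes "f \<in> borel_measurable N" "g \<in> borel_measurable N"
  shows "(\<lambda>x. idx t (f x) (g x)) \<in> borel_measurable N"
  unfolding idx_def using assms by measurable

lemma pch_meas: "{1..<t} \<subseteq> I \<Longrightarrow> (\<lambda>x. pch x t) \<in> measurable (Om I) (count_space UNIV)"
proof (induction t rule: less_induct)
  case (less t)
  show ?case
  proof (cases t)
    case 0
    have "(\<lambda>x. pch x t) = (\<lambda>x. pch (\<lambda>_ _. 0) 0)" using 0 pch_0 by auto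
    then show ?thesis by simp
  next
    case (Suc t')
    have IH: "(\<lambda>x. pch x s) \<in> measurable (Om I) (count_space UNIV)" if "s \<le> t'" for s
    proof -
      have "{1..<s} \<subseteq> {1..<t}" using that Suc by auto
      then have "{1..<s} \<subseteq> I" using less.prems by (rule subset_trans)
      moreover have "s < t" using that Suc by simp
      ultimately show ?thesis using less.IH[of s] by simp
    qed
    have cm: "(\<lambda>x. cnt x t' a) \<in> borel_measurable (Om I)" for a
      unfolding cnt_def
    proof (rule borel_measurable_sum)
      fix s assume "s \<in> {1..t'}"
      then have [measurable]: "(\<lambda>x. pch x s) \<in> measurable (Om I) (count_space UNIV)" using IH by auto
      show "(\<lambda>x. if pch x s = a then 1 else 0 :: real) \<in> borel_measurable (Om I)" by measurable
    qed
    have sm: "(\<lambda>x. ssum x t' a) \<in> borel_measurable (Om I)" if a: "a \<in> A" for a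
      unfolding ssum_def
    proof (rule borel_measurable_sum)
      fix s assume s: "s \<in> {1..t'}"
      then have [measurable]: "(\<lambda>x. pch x s) \<in> measurable (Om I) (count_space UNIV)" using IH by auto
      have "s \<in> I" using s less.prems Suc by auto
      note [measurable] = coord_meas[OF this a]
      show "(\<lambda>x. if pch x s = a then x s a else 0) \<in> borel_measurable (Om I)" by measurable
    qed
    define g where "g a x = idx t' (cnt x t' a) (ssum x t' a)" for a x
    have gm: "g a \<in> borel_measurable (Om I)" if "a \<in> A" for a
      unfolding g_def by (rule idx_meas[OF cm sm[OF that]])
    have eq: "(\<lambda>x. pch x t) = (\<lambda>x. chs t' (\<lambda>a. g a x))"
      unfolding Suc pch_Suc g_def ..
    show ?thesis
    proof (cases "t' < Kmax M K")
      case True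
      then show ?thesis unfolding eq chs_def by simp
    next
      case False
      have eq2: "(\<lambda>x. pch x t) = (\<lambda>x. pick M K (\<lambda>a. g a x))"
        unfolding eq chs_def using False by simp
      show ?thesis unfolding eq2 measurable_count_space_eq2_countable
      proof (intro conjI ballI)
        fix b :: "nat list"
        show "(\<lambda>x. pick M K (\<lambda>a. g a x)) -` {b} \<inter> space (Om I) \<in> sets (Om I)"
        proof (cases "b \<in> A")
          case False
          then have "(\<lambda>x. pick M K (\<lambda>a. g a x)) -` {b} \<inter> space (Om I) = {}"
            using pick_in[OF K_pos] by auto
          then show ?thesis by simp
        next
          case True
          have "(\<lambda>x. pick M K (\<lambda>a. g a x)) -` {b} \<inter> space (Om I) =
             {x \<in> space (Om I). (\<forall>c\<in>A. g c x \<le> g b x) \<and> (\<forall>c\<in>A. lex_less M c b \<longrightarrow> g c x < g b x)}"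
          proof -
            have "pick M K (\<lambda>a. g a x) = b \<longleftrightarrow> (\<forall>c\<in>A. g c x \<le> g b x) \<and> (\<forall>c\<in>A. lex_less M c b \<longrightarrow> g c x < g b x)" for x
              using pick_char[OF K_pos True, of "\<lambda>a. g a x"] by simp
            then show ?thesis by blast
          qed
          also have "\<dots> \<in> sets (Om I)"
          proof -
            have "Measurable.pred (Om I) (\<lambda>x. (\<forall>c\<in>A. g c x \<le> g b x) \<and> (\<forall>c\<in>A. lex_less M c b \<longrightarrow> g c x < g b x))"
            proof (intro pred_intros_logic pred_intros_finite[OF A_finite])
              fix c assume c: "c \<in> A"
              show "Measurable.pred (Om I) (\<lambda>x. g c x \<le> g b x)"
                unfolding pred_def using gm[OF c] gm[OF True] by measurable
              show "Measurable.pred (Om I) (\<lambda>x. g c x < g b x)"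
                unfolding pred_def using gm[OF c] gm[OF True] by measurable
              show "Measurable.pred (Om I) (\<lambda>x. lex_less M c b)" by simp
            qed
            then show ?thesis unfolding pred_def .
          qed
          finally show ?thesis .
        qed
      qed simp
    qed
  qed
qed

end


context mucb begin

lemma cnt_meas: "{1..t} \<subseteq> I \<Longrightarrow> (\<lambda>x. cnt x t a) \<in> borel_measurable (Om I)"
  unfolding cnt_def
proof (rule borel_measurable_sum)
  fix s assume "{1..t} \<subseteq> I" "s \<in> {1..t}"
  then have "{1..<s} \<subseteq> I" by auto
  note [measurable] = pch_meas[OF this]
  show "(\<lambda>x. if pch x s = a then 1 else 0 :: real) \<in> borel_measurable (Om I)" by measurable
qed

lemma ssum_meas: "{1..t} \<subseteq> I \<Longrightarrow> a \<in> A \<Longrightarrow> (\<lambda>x. ssum x t a) \<in> borel_measurable (Om I)"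
  unfolding ssum_def
proof (rule borel_measurable_sum)
  fix s assume I: "{1..t} \<subseteq> I" and s: "s \<in> {1..t}" and a: "a \<in> A"
  then have "{1..<s} \<subseteq> I" by auto
  note [measurable] = pch_meas[OF this]
  have "s \<in> I" using s I by auto
  note [measurable] = coord_meas[OF this a]
  show "(\<lambda>x. if pch x s = a then x s a else 0) \<in> borel_measurable (Om I)" by measurable
qed

lemma cnt_Suc: "cnt x (Suc t) a = cnt x t a + (if pch x (Suc t) = a then 1 else 0)"
  unfolding cnt_def by (simp add: atLeastAtMostSuc_conv)

lemma ssum_Suc: "ssum x (Suc t) a = ssum x t a + (if pch x (Suc t) = a then x (Suc t) a else 0)"
  unfolding ssum_def by (simp add: atLeastAtMostSuc_conv)

lemma cnt_nonneg: "0 \<le> cnt x t a"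
  unfolding cnt_def by (rule sum_nonneg) auto

lemma cnt_le: "cnt x t a \<le> t"
proof -
  have "cnt x t a \<le> (\<Sum>s=1..t. 1::real)" unfolding cnt_def by (rule sum_mono) auto
  then show ?thesis by simp
qed

lemma cnt_nat: "\<exists>n::nat. cnt x t a = real n"
  unfolding cnt_def by (induction t) (auto simp: atLeastAtMostSuc_conv intro: exI[of _ "Suc _"] exI[of _ 0])

end

locale mucb_prob = mucb M K + prob_space P
  for M :: nat and K :: "nat \<Rightarrow> nat" and P :: "'w measure" +
  fixes X :: "nat list \<Rightarrow> nat \<Rightarrow> 'w \<Rightarrow> real"
    and F :: "nat list \<Rightarrow> real measure"
    and \<mu> :: "nat list \<Rightarrow> real"
  assumes F_prob: "\<forall>a\<in>arm_tuples M K. prob_space (F a) \<and> sets (F a) = sets borel"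
    and F_supp: "\<forall>a\<in>arm_tuples M K. AE x in F a. 0 \<le> x \<and> x \<le> 1"
    and mu_def: "\<forall>a\<in>arm_tuples M K. \<mu> a = integral\<^sup>L (F a) (\<lambda>x. x)"
    and X_meas: "\<forall>a\<in>arm_tuples M K. \<forall>t\<ge>1. X a t \<in> borel_measurable P"
    and X_distr: "\<forall>a\<in>arm_tuples M K. \<forall>t\<ge>1. distr P borel (X a t) = F a"
    and X_indep: "indep_vars (\<lambda>_. PiM (arm_tuples M K) (\<lambda>_. borel))
                    (\<lambda>t \<omega>. restrict (\<lambda>a. X a t \<omega>) (arm_tuples M K)) {1..}"
begin

definition xo :: "'w \<Rightarrow> nat \<Rightarrow> nat list \<Rightarrow> real" where
  "xo \<omega> = (\<lambda>s a. X a s \<omega>)"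

definition V :: "nat set \<Rightarrow> 'w \<Rightarrow> nat \<Rightarrow> nat list \<Rightarrow> real" where
  "V I \<omega> = restrict (\<lambda>s. restrict (\<lambda>a. X a s \<omega>) A) I"

lemma rewards_upto_eq: "rewards_upto M K X \<omega> t = prw (xo \<omega>) t"
  unfolding prw_def xo_def by (induction t) (simp_all add: Let_def)

lemma played_eq: "played M K X \<omega> t = pch (xo \<omega>) t"
  unfolding pch_def played_def rewards_upto_eq prw_def xo_def by simp

lemma V_meas: "I \<subseteq> {1..} \<Longrightarrow> V I \<in> measurable P (Om I)"
  unfolding V_def Om_def
  by (rule measurable_restrict) (use X_indep in \<open>auto simp: indep_vars_def\<close>)

lemma V_at: "s \<in> I \<Longrightarrow> a \<in> A \<Longrightarrow> V I \<omega> s a = X a s \<omega>"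
  unfolding V_def by simp

lemma pch_V: "{1..<t} \<subseteq> I \<Longrightarrow> pch (V I \<omega>) t = pch (xo \<omega>) t"
  by (rule pch_cong) (auto simp: V_at xo_def)

lemma cnt_V: "{1..t} \<subseteq> I \<Longrightarrow> cnt (V I \<omega>) t a = cnt (xo \<omega>) t a"
  unfolding cnt_def by (intro sum.cong refl) (subst pch_V, auto)

lemma ssum_V: "{1..t} \<subseteq> I \<Longrightarrow> a \<in> A \<Longrightarrow> ssum (V I \<omega>) t a = ssum (xo \<omega>) t a"
  unfolding ssum_def
proof (intro sum.cong refl)
  fix s assume I: "{1..t} \<subseteq> I" "a \<in> A" and s: "s \<in> {1..t}"
  have "pch (V I \<omega>) s = pch (xo \<omega>) s" using I s by (intro pch_V) auto
  moreover have "V I \<omega> s a = xo \<omega> s a" using I s by (auto simp: V_at xo_def)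
  ultimately show "(if pch (V I \<omega>) s = a then V I \<omega> s a else 0) = (if pch (xo \<omega>) s = a then xo \<omega> s a else 0)"
    by simp
qed

lemma pchP[measurable]: "(\<lambda>\<omega>. pch (xo \<omega>) t) \<in> measurable P (count_space UNIV)"
proof -
  have "(\<lambda>\<omega>. pch (V {1..<t} \<omega>) t) \<in> measurable P (count_space UNIV)"
    using measurable_compose[OF V_meas[of "{1..<t}"] pch_meas[of t "{1..<t}"]] by (auto simp: subset_iff)
  then show ?thesis using pch_V[of t "{1..<t}"] by simp
qed

lemma cntP[measurable]: "(\<lambda>\<omega>. cnt (xo \<omega>) t a) \<in> borel_measurable P"
proof -
  have "(\<lambda>\<omega>. cnt (V {1..t} \<omega>) t a) \<in> borel_measurable P"
    using measurable_compose[OF V_meas cnt_meas[of t "{1..t}"]] by auto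
  then show ?thesis using cnt_V[of t "{1..t}"] by simp
qed

lemma ssumP: "a \<in> A \<Longrightarrow> (\<lambda>\<omega>. ssum (xo \<omega>) t a) \<in> borel_measurable P"
proof -
  assume a: "a \<in> A"
  have "(\<lambda>\<omega>. ssum (V {1..t} \<omega>) t a) \<in> borel_measurable P"
    using measurable_compose[OF V_meas ssum_meas[of t "{1..t}" a]] a by auto
  then show ?thesis using ssum_V[of t "{1..t}" a] a by simp
qed

lemma indep_V: "indep_var (Om {1..t}) (V {1..t}) (Om {Suc t}) (V {Suc t})"
  unfolding Om_def V_def
  using indep_var_restrict[OF X_indep, of "{1..t}" "{Suc t}"] by auto

lemma indep_var_nn_integral:
  fixes X1 X2 :: "'w \<Rightarrow> ennreal"
  assumes "indep_var borel X1 borel X2"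
  shows "(\<integral>\<^sup>+\<omega>. X1 \<omega> * X2 \<omega> \<partial>P) = (\<integral>\<^sup>+\<omega>. X1 \<omega> \<partial>P) * (\<integral>\<^sup>+\<omega>. X2 \<omega> \<partial>P)"
proof -
  have **: "(\<lambda> _. borel) = case_bool borel borel"
    by (rule ext, metis (full_types) bool.simps(3) bool.simps(4))
  have ind: "indep_vars (\<lambda>_. borel) (case_bool X1 X2) UNIV"
    using assms(1) unfolding indep_var_def ** .
  have "(\<integral>\<^sup>+\<omega>. X1 \<omega> * X2 \<omega> \<partial>P) = (\<integral>\<^sup>+\<omega>. (\<Prod>i\<in>UNIV. (case_bool X1 X2 i \<omega>)) \<partial>P)"
    by (simp add: UNIV_bool mult.commute)
  also have "\<dots> = (\<Prod>i\<in>UNIV. \<integral>\<^sup>+\<omega>. (case_bool X1 X2 i \<omega>) \<partial>P)"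
    by (rule indep_vars_nn_integral) (use ind in auto)
  also have "\<dots> = (\<integral>\<^sup>+\<omega>. X1 \<omega> \<partial>P) * (\<integral>\<^sup>+\<omega>. X2 \<omega> \<partial>P)"
    by (simp add: UNIV_bool mult.commute)
  finally show ?thesis .
qed

end


lemma hoeff_pos:
  assumes N: "prob_space N" "sets N = sets borel" and supp: "AE x in N. 0 \<le> x \<and> x \<le> 1" and l: "l > 0"
  shows "(\<integral>\<^sup>+x. ennreal (exp (l * (x - integral\<^sup>L N (\<lambda>x. x)))) \<partial>N) \<le> ennreal (exp (l\<^sup>2 / 8))"
proof -
  have ax: "interval_bounded_random_variable_axioms N (\<lambda>x. x) 0 1"
  proof (rule interval_bounded_random_variable_axioms.intro)
    show "(\<lambda>x. x) \<in> borel_measurable N" by (subst measurable_cong_sets[OF N(2) refl]) measurable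
    show "AE x in N. x \<in> {0..1}" using supp by (auto elim!: eventually_mono)
  qed
  interpret interval_bounded_random_variable N "\<lambda>x. x" 0 1
    by (rule interval_bounded_random_variable.intro[OF N(1) ax])
  show ?thesis using Hoeffdings_lemma_nn_integral[OF l] by simp
qed

lemma hoeff_neg:
  assumes N: "prob_space N" "sets N = sets borel" and supp: "AE x in N. 0 \<le> x \<and> x \<le> 1" and l: "l < 0"
  shows "(\<integral>\<^sup>+x. ennreal (exp (l * (x - integral\<^sup>L N (\<lambda>x. x)))) \<partial>N) \<le> ennreal (exp (l\<^sup>2 / 8))"
proof -
  have ax: "interval_bounded_random_variable_axioms N (\<lambda>x. - x) (-1) 0"
  proof (rule interval_bounded_random_variable_axioms.intro)
    show "(\<lambda>x. - x) \<in> borel_measurable N" by (subst measurable_cong_sets[OF N(2) refl]) measurable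
    show "AE x in N. - x \<in> {-1..0}" using supp by (auto elim!: eventually_mono)
  qed
  interpret interval_bounded_random_variable N "\<lambda>x. - x" "-1" 0
    by (rule interval_bounded_random_variable.intro[OF N(1) ax])
  have "-l > 0" using l by simp
  from Hoeffdings_lemma_nn_integral[OF this]
  have "(\<integral>\<^sup>+x. ennreal (exp (- l * (- x - expectation (\<lambda>x. - x)))) \<partial>N) \<le> ennreal (exp ((- l)\<^sup>2 * (0 - - 1)\<^sup>2 / 8))" .
  moreover have "expectation (\<lambda>x. - x) = - expectation (\<lambda>x. x)" by simp
  ultimately show ?thesis by (simp add: algebra_simps)
qed

lemma hoeff:
  assumes N: "prob_space N" "sets N = sets borel" and supp: "AE x in N. 0 \<le> x \<and> x \<le> 1"
  shows "(\<integral>\<^sup>+x. ennreal (exp (l * (x - integral\<^sup>L N (\<lambda>x. x)) - l\<^sup>2 / 8)) \<partial>N) \<le> 1"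
proof -
  interpret prob_space N by (rule N)
  have "(\<integral>\<^sup>+x. ennreal (exp (l * (x - integral\<^sup>L N (\<lambda>x. x)) - l\<^sup>2 / 8)) \<partial>N)
      = (\<integral>\<^sup>+x. ennreal (exp (l * (x - integral\<^sup>L N (\<lambda>x. x)))) * ennreal (exp (- (l\<^sup>2 / 8))) \<partial>N)"
    by (intro nn_integral_cong) (simp add: ennreal_mult[symmetric] exp_add[symmetric])
  also have "\<dots> = (\<integral>\<^sup>+x. ennreal (exp (l * (x - integral\<^sup>L N (\<lambda>x. x)))) \<partial>N) * ennreal (exp (- (l\<^sup>2 / 8)))"
  proof (rule nn_integral_multc)
    show "(\<lambda>x. ennreal (exp (l * (x - integral\<^sup>L N (\<lambda>x. x))))) \<in> borel_measurable N"
      by (subst measurable_cong_sets[OF N(2) refl]) measurable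
  qed
  also have "\<dots> \<le> ennreal (exp (l\<^sup>2 / 8)) * ennreal (exp (- (l\<^sup>2 / 8)))"
  proof (intro mult_right_mono)
    show "(\<integral>\<^sup>+x. ennreal (exp (l * (x - integral\<^sup>L N (\<lambda>x. x)))) \<partial>N) \<le> ennreal (exp (l\<^sup>2 / 8))"
    proof (cases l "0::real" rule: linorder_cases)
      case less then show ?thesis by (rule hoeff_neg[OF N supp])
    next
      case equal then show ?thesis by (simp add: emeasure_space_1)
    next
      case greater then show ?thesis by (rule hoeff_pos[OF N supp])
    qed
  qed simp
  also have "\<dots> = 1" by (simp add: ennreal_mult[symmetric] exp_minus)
  finally show ?thesis .
qed

context mucb_prob begin

lemma hoeffX:
  assumes a: "a \<in> A" and t: "t \<ge> 1"
  shows "(\<integral>\<^sup>+\<omega>. ennreal (exp (l * (X a t \<omega> - \<mu> a) - l\<^sup>2 / 8)) \<partial>P) \<le> 1"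
proof -
  have Xm: "X a t \<in> borel_measurable P" using X_meas a t by auto
  have "(\<integral>\<^sup>+\<omega>. ennreal (exp (l * (X a t \<omega> - \<mu> a) - l\<^sup>2 / 8)) \<partial>P)
      = (\<integral>\<^sup>+y. ennreal (exp (l * (y - \<mu> a) - l\<^sup>2 / 8)) \<partial>distr P borel (X a t))"
    by (rule nn_integral_distr[symmetric]) (use Xm in auto)
  also have "\<dots> = (\<integral>\<^sup>+y. ennreal (exp (l * (y - integral\<^sup>L (F a) (\<lambda>x. x)) - l\<^sup>2 / 8)) \<partial>F a)"
    using X_distr a t mu_def by simp
  also have "\<dots> \<le> 1"
    by (rule hoeff) (use F_prob F_supp a in auto)
  finally show ?thesis .
qed

definition Zf :: "real \<Rightarrow> nat list \<Rightarrow> (nat \<Rightarrow> nat list \<Rightarrow> real) \<Rightarrow> nat \<Rightarrow> real" where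
  "Zf l a x t = exp (l * (ssum x t a - \<mu> a * cnt x t a) - l\<^sup>2 / 8 * cnt x t a)"

lemma Zf_pos: "Zf l a x t > 0" unfolding Zf_def by simp

lemma Zf_Suc: "Zf l a x (Suc t) = Zf l a x t * (if pch x (Suc t) = a then exp (l * (x (Suc t) a - \<mu> a) - l\<^sup>2 / 8) else 1)"
  unfolding Zf_def cnt_Suc ssum_Suc by (simp add: exp_add[symmetric] algebra_simps)

lemma Zf_meas: "a \<in> A \<Longrightarrow> (\<lambda>y. Zf l a y t) \<in> borel_measurable (Om {1..t})"
proof -
  assume a: "a \<in> A"
  note [measurable] = cnt_meas[of t "{1..t}" a] ssum_meas[of t "{1..t}" a]
  show ?thesis unfolding Zf_def using a by measurable
qed

lemma Zf_V: "a \<in> A \<Longrightarrow> Zf l a (V {1..t} \<omega>) t = Zf l a (xo \<omega>) t"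
  unfolding Zf_def by (simp add: cnt_V ssum_V)

lemma Z_int: "a \<in> A \<Longrightarrow> (\<integral>\<^sup>+\<omega>. ennreal (Zf l a (xo \<omega>) t) \<partial>P) \<le> 1"
proof (induction t)
  case 0
  then show ?case by (simp add: Zf_def cnt_def ssum_def emeasure_space_1)
next
  case (Suc t)
  note a = Suc.prems
  define f0 where "f0 y = ennreal (Zf l a y t * (if pch y (Suc t) = a then 0 else 1))" for y
  define f1 where "f1 y = ennreal (Zf l a y t * (if pch y (Suc t) = a then 1 else 0))" for y
  define h where "h z = ennreal (exp (l * (z (Suc t) a - \<mu> a) - l\<^sup>2 / 8))" for z :: "nat \<Rightarrow> nat list \<Rightarrow> real"
  have pm: "(\<lambda>y. pch y (Suc t)) \<in> measurable (Om {1..t}) (count_space UNIV)"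
    by (rule pch_meas) auto
  note [measurable] = pm Zf_meas[OF a]
  have f0m[measurable]: "f0 \<in> borel_measurable (Om {1..t})" unfolding f0_def by measurable
  have f1m[measurable]: "f1 \<in> borel_measurable (Om {1..t})" unfolding f1_def by measurable
  have hm[measurable]: "h \<in> borel_measurable (Om {Suc t})"
    unfolding h_def using coord_meas[of "Suc t" "{Suc t}" a] a by measurable
  have V1[measurable]: "V {1..t} \<in> measurable P (Om {1..t})" by (rule V_meas) auto
  have V2[measurable]: "V {Suc t} \<in> measurable P (Om {Suc t})" by (rule V_meas) auto
  have pt: "ennreal (Zf l a (xo \<omega>) (Suc t)) = f0 (V {1..t} \<omega>) + f1 (V {1..t} \<omega>) * h (V {Suc t} \<omega>)" for \<omega>
  proof -
    have e1: "pch (V {1..t} \<omega>) (Suc t) = pch (xo \<omega>) (Suc t)" by (rule pch_V) auto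
    have e2: "V {Suc t} \<omega> (Suc t) a = xo \<omega> (Suc t) a" using a by (simp add: V_at xo_def)
    show ?thesis
      unfolding f0_def f1_def h_def Zf_Suc e1 e2 Zf_V[OF a]
      using Zf_pos[of l a "xo \<omega>" t] by (simp add: ennreal_mult[symmetric])
  qed
  have "(\<integral>\<^sup>+\<omega>. ennreal (Zf l a (xo \<omega>) (Suc t)) \<partial>P)
      = (\<integral>\<^sup>+\<omega>. f0 (V {1..t} \<omega>) + f1 (V {1..t} \<omega>) * h (V {Suc t} \<omega>) \<partial>P)"
    unfolding pt ..
  also have "\<dots> = (\<integral>\<^sup>+\<omega>. f0 (V {1..t} \<omega>) \<partial>P) + (\<integral>\<^sup>+\<omega>. f1 (V {1..t} \<omega>) * h (V {Suc t} \<omega>) \<partial>P)"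
    by (rule nn_integral_add) measurable
  also have "(\<integral>\<^sup>+\<omega>. f1 (V {1..t} \<omega>) * h (V {Suc t} \<omega>) \<partial>P)
      = (\<integral>\<^sup>+\<omega>. f1 (V {1..t} \<omega>) \<partial>P) * (\<integral>\<^sup>+\<omega>. h (V {Suc t} \<omega>) \<partial>P)"
  proof -
    have "indep_var borel (f1 \<circ> V {1..t}) borel (h \<circ> V {Suc t})"
      by (rule indep_var_compose[OF indep_V f1m hm])
    then show ?thesis using indep_var_nn_integral[of "f1 \<circ> V {1..t}" "h \<circ> V {Suc t}"] by (simp add: comp_def)
  qed
  also have "(\<integral>\<^sup>+\<omega>. h (V {Suc t} \<omega>) \<partial>P) \<le> 1"
  proof -
    have "(\<integral>\<^sup>+\<omega>. h (V {Suc t} \<omega>) \<partial>P) = (\<integral>\<^sup>+\<omega>. ennreal (exp (l * (X a (Suc t) \<omega> - \<mu> a) - l\<^sup>2 / 8)) \<partial>P)"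
      unfolding h_def using a by (simp add: V_at)
    also have "\<dots> \<le> 1" by (rule hoeffX[OF a]) simp
    finally show ?thesis .
  qed
  then have "(\<integral>\<^sup>+\<omega>. f0 (V {1..t} \<omega>) \<partial>P) + (\<integral>\<^sup>+\<omega>. f1 (V {1..t} \<omega>) \<partial>P) * (\<integral>\<^sup>+\<omega>. h (V {Suc t} \<omega>) \<partial>P)
      \<le> (\<integral>\<^sup>+\<omega>. f0 (V {1..t} \<omega>) \<partial>P) + (\<integral>\<^sup>+\<omega>. f1 (V {1..t} \<omega>) \<partial>P) * 1"
    by (intro add_left_mono mult_left_mono) auto
  also have "\<dots> = (\<integral>\<^sup>+\<omega>. f0 (V {1..t} \<omega>) \<partial>P) + (\<integral>\<^sup>+\<omega>. f1 (V {1..t} \<omega>) \<partial>P)"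
    by simp
  also have "\<dots> = (\<integral>\<^sup>+\<omega>. f0 (V {1..t} \<omega>) + f1 (V {1..t} \<omega>) \<partial>P)"
    by (rule nn_integral_add[symmetric]) measurable
  also have "\<dots> = (\<integral>\<^sup>+\<omega>. ennreal (Zf l a (xo \<omega>) t) \<partial>P)"
  proof (intro nn_integral_cong)
    fix \<omega>
    show "f0 (V {1..t} \<omega>) + f1 (V {1..t} \<omega>) = ennreal (Zf l a (xo \<omega>) t)"
      unfolding f0_def f1_def Zf_V[OF a] by simp
  qed
  also have "\<dots> \<le> 1" using Suc.IH[OF a] .
  finally show ?case .
qed

lemma tail:
  assumes a: "a \<in> A"
  shows "measure P {\<omega>\<in>space P. cnt (xo \<omega>) t a = n \<and> c \<le> l * (ssum (xo \<omega>) t a - \<mu> a * n) - l\<^sup>2 / 8 * n} \<le> exp (- c)"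
proof -
  let ?E = "{\<omega>\<in>space P. cnt (xo \<omega>) t a = n \<and> c \<le> l * (ssum (xo \<omega>) t a - \<mu> a * n) - l\<^sup>2 / 8 * n}"
  note [measurable] = ssumP[OF a]
  have E: "?E \<in> sets P" by measurable
  have "emeasure P ?E = (\<integral>\<^sup>+\<omega>. indicator ?E \<omega> \<partial>P)" using E by simp
  also have "\<dots> \<le> (\<integral>\<^sup>+\<omega>. ennreal (exp (- c)) * ennreal (Zf l a (xo \<omega>) t) \<partial>P)"
  proof (intro nn_integral_mono)
    fix \<omega> assume "\<omega> \<in> space P"
    show "indicator ?E \<omega> \<le> ennreal (exp (- c)) * ennreal (Zf l a (xo \<omega>) t)"
    proof (cases "\<omega> \<in> ?E")
      case True
      then have "c \<le> l * (ssum (xo \<omega>) t a - \<mu> a * cnt (xo \<omega>) t a) - l\<^sup>2 / 8 * cnt (xo \<omega>) t a" by simp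
      then have "exp c \<le> Zf l a (xo \<omega>) t" unfolding Zf_def by simp
      then have "1 \<le> exp (- c) * Zf l a (xo \<omega>) t" by (simp add: exp_minus field_simps)
      moreover have "ennreal (exp (- c)) * ennreal (Zf l a (xo \<omega>) t) = ennreal (exp (- c) * Zf l a (xo \<omega>) t)"
        by (rule ennreal_mult[symmetric]) (use Zf_pos[of l a "xo \<omega>" t] in auto)
      ultimately show ?thesis using True by (simp add: ennreal_1[symmetric] ennreal_leI del: ennreal_1)
    qed simp
  qed
  also have "\<dots> = ennreal (exp (- c)) * (\<integral>\<^sup>+\<omega>. ennreal (Zf l a (xo \<omega>) t) \<partial>P)"
  proof (rule nn_integral_cmult)
    have "(\<lambda>\<omega>. Zf l a (V {1..t} \<omega>) t) \<in> borel_measurable P"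
      using measurable_compose[OF V_meas[of "{1..t}"] Zf_meas[OF a]] by auto
    then show "(\<lambda>\<omega>. ennreal (Zf l a (xo \<omega>) t)) \<in> borel_measurable P" using Zf_V[OF a] by simp
  qed
  also have "\<dots> \<le> ennreal (exp (- c)) * 1" by (intro mult_left_mono Z_int[OF a]) simp
  finally have "emeasure P ?E \<le> ennreal (exp (- c))" by simp
  then show ?thesis using E by (simp add: emeasure_eq_measure)
qed

end


lemma digits_aux:
  fixes m M k :: nat and K :: "nat \<Rightarrow> nat"
  shows "k \<le> M \<Longrightarrow> m mod (\<Prod>j\<in>{k..<M}. K j) =
     (\<Sum>i\<in>{k..<M}. ((m div (\<Prod>j\<in>{i<..<M}. K j)) mod K i) * (\<Prod>j\<in>{i<..<M}. K j))"
proof (induction "M - k" arbitrary: k)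
  case 0 then show ?case by simp
next
  case (Suc d)
  then have k: "k < M" and d: "d = M - Suc k" by auto
  have Q: "{k<..<M} = {Suc k..<M}" by auto
  have "m mod (\<Prod>j\<in>{k..<M}. K j) = m mod ((\<Prod>j\<in>{Suc k..<M}. K j) * K k)"
    using k by (simp add: prod.atLeast_Suc_lessThan mult.commute)
  also have "\<dots> = (\<Prod>j\<in>{Suc k..<M}. K j) * (m div (\<Prod>j\<in>{Suc k..<M}. K j) mod K k) + m mod (\<Prod>j\<in>{Suc k..<M}. K j)"
    by (rule mod_mult2_eq)
  also have "m mod (\<Prod>j\<in>{Suc k..<M}. K j) = (\<Sum>i\<in>{Suc k..<M}. ((m div (\<Prod>j\<in>{i<..<M}. K j)) mod K i) * (\<Prod>j\<in>{i<..<M}. K j))"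
    using Suc.hyps(1)[of "Suc k"] d k by simp
  also have "(\<Prod>j\<in>{Suc k..<M}. K j) * (m div (\<Prod>j\<in>{Suc k..<M}. K j) mod K k) + (\<Sum>i\<in>{Suc k..<M}. ((m div (\<Prod>j\<in>{i<..<M}. K j)) mod K i) * (\<Prod>j\<in>{i<..<M}. K j))
     = (\<Sum>i\<in>{k..<M}. ((m div (\<Prod>j\<in>{i<..<M}. K j)) mod K i) * (\<Prod>j\<in>{i<..<M}. K j))"
    using k by (simp add: sum.atLeast_Suc_lessThan Q mult.commute)
  finally show ?case .
qed

lemma digits:
  fixes m :: nat
  assumes "m < Kmax M K"
  shows "m = (\<Sum>i\<in>{0..<M}. ((m div (\<Prod>j\<in>{i<..<M}. K j)) mod K i) * (\<Prod>j\<in>{i<..<M}. K j))"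
proof -
  have "m = m mod (\<Prod>j\<in>{0..<M}. K j)" using assms by (simp add: Kmax_def atLeast0LessThan)
  also have "\<dots> = (\<Sum>i\<in>{0..<M}. ((m div (\<Prod>j\<in>{i<..<M}. K j)) mod K i) * (\<Prod>j\<in>{i<..<M}. K j))"
    by (rule digits_aux) simp
  finally show ?thesis .
qed

lemma init_inj:
  assumes "1 \<le> s1" "s1 \<le> Kmax M K" "1 \<le> s2" "s2 \<le> Kmax M K"
    and eq: "map (\<lambda>i. init_arm M K i s1) [0..<M] = map (\<lambda>i. init_arm M K i s2) [0..<M]"
  shows "s1 = s2"
proof -
  have c: "((s1 - 1) div (\<Prod>j\<in>{i<..<M}. K j)) mod K i = ((s2 - 1) div (\<Prod>j\<in>{i<..<M}. K j)) mod K i"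
    if "i \<in> {0..<M}" for i
  proof -
    have "init_arm M K i s1 = init_arm M K i s2"
      using eq that by auto
    then show ?thesis using that by (simp add: init_arm_def)
  qed
  have "s1 - 1 = (\<Sum>i\<in>{0..<M}. (((s1 - 1) div (\<Prod>j\<in>{i<..<M}. K j)) mod K i) * (\<Prod>j\<in>{i<..<M}. K j))"
    by (rule digits) (use assms in simp)
  also have "\<dots> = (\<Sum>i\<in>{0..<M}. (((s2 - 1) div (\<Prod>j\<in>{i<..<M}. K j)) mod K i) * (\<Prod>j\<in>{i<..<M}. K j))"
    by (rule sum.cong[OF refl]) (simp only: c)
  also have "\<dots> = s2 - 1"
    by (rule digits[symmetric]) (use assms in simp)
  finally have "s1 - 1 = s2 - 1" .
  then show ?thesis using assms(1,3) by simp
qed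

context mucb begin

lemma pch_init: "1 \<le> s \<Longrightarrow> s \<le> Kmax M K \<Longrightarrow> pch x s = map (\<lambda>i. init_arm M K i s) [0..<M]"
  by (cases s) (auto simp: pch_Suc chs_def)

lemma cnt_init:
  assumes "t < Kmax M K" "pch x (Suc t) = b"
  shows "cnt x t b = 0"
  unfolding cnt_def
proof (rule sum.neutral, intro ballI)
  fix s assume s: "s \<in> {1..t}"
  have "pch x s \<noteq> pch x (Suc t)"
  proof
    assume "pch x s = pch x (Suc t)"
    then have "s = Suc t" using s assms(1)
      by (intro init_inj[of s M K "Suc t"]) (auto simp: pch_init)
    then show False using s by simp
  qed
  then show "(if pch x s = b then 1 else 0) = 0" using assms(2) by simp
qed

lemma cnt_pos: "cnt x t a \<noteq> 0 \<Longrightarrow> 1 \<le> cnt x t a"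
  using cnt_nat[of x t a] by auto

end

context mucb_prob begin

definition w :: "nat \<Rightarrow> real \<Rightarrow> real" where
  "w t n = sqrt (2 * ln (1 / (1 / (real t)^2)) / n)"

definition B1 :: "nat list \<Rightarrow> (nat \<Rightarrow> nat list \<Rightarrow> real) \<Rightarrow> nat \<Rightarrow> bool" where
  "B1 a0 x t \<longleftrightarrow> 1 \<le> cnt x t a0 \<and> ssum x t a0 / cnt x t a0 + w t (cnt x t a0) \<le> \<mu> a0"

definition B2 :: "nat list \<Rightarrow> nat list \<Rightarrow> real \<Rightarrow> (nat \<Rightarrow> nat list \<Rightarrow> real) \<Rightarrow> nat \<Rightarrow> bool" where
  "B2 a0 b u x t \<longleftrightarrow> u \<le> cnt x t b \<and> 1 \<le> cnt x t b \<and> \<mu> a0 < ssum x t b / cnt x t b + w t (cnt x t b)"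

lemma round_cases:
  assumes a0: "a0 \<in> A" and b: "b \<in> A" and pb: "pch x (Suc t) = b"
  shows "cnt x t b < u \<or> cnt x t b = 0 \<or> (Kmax M K \<le> t \<and> (B1 a0 x t \<or> B2 a0 b u x t))"
proof (cases "t < Kmax M K")
  case True then show ?thesis using cnt_init pb by auto
next
  case False
  define g where "g a = idx t (cnt x t a) (ssum x t a)" for a
  have "pick M K g = b" using pb False unfolding pch_Suc chs_def g_def by simp
  then have le: "g a0 \<le> g b" using pick_char[OF K_pos b, of g] a0 by auto
  show ?thesis
  proof (cases "cnt x t b = 0")
    case True then show ?thesis by simp
  next
    case nb: False
    then have gb: "g b = ereal (ssum x t b / cnt x t b + w t (cnt x t b))"
      unfolding g_def idx_def w_def by simp
    show ?thesis
    proof (cases "cnt x t a0 = 0")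
      case True
      then have "g a0 = \<infinity>" unfolding g_def idx_def by simp
      then show ?thesis using le gb by simp
    next
      case n0: False
      then have ga: "g a0 = ereal (ssum x t a0 / cnt x t a0 + w t (cnt x t a0))"
        unfolding g_def idx_def w_def by simp
      show ?thesis
      proof (cases "B1 a0 x t")
        case True then show ?thesis using False by simp
      next
        case nB1: False
        then have "\<mu> a0 < ssum x t a0 / cnt x t a0 + w t (cnt x t a0)"
          using cnt_pos[OF n0] unfolding B1_def by auto
        also have "\<dots> \<le> ssum x t b / cnt x t b + w t (cnt x t b)" using le ga gb by simp
        finally have "\<mu> a0 < ssum x t b / cnt x t b + w t (cnt x t b)" .
        then show ?thesis using cnt_pos[OF nb] False unfolding B2_def by auto
      qed
    qed
  qed
qed

definition R :: "nat list \<Rightarrow> nat list \<Rightarrow> real \<Rightarrow> (nat \<Rightarrow> nat list \<Rightarrow> real) \<Rightarrow> nat \<Rightarrow> real" where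
  "R a0 b u x T = (\<Sum>t\<in>{Kmax M K..<T}. (if B1 a0 x t then 1 else 0) + (if B2 a0 b u x t then 1 else 0))"

lemma R_nonneg: "0 \<le> R a0 b u x T"
  unfolding R_def by (rule sum_nonneg) auto

lemma count_bound:
  assumes a0: "a0 \<in> A" and b: "b \<in> A" and u: "0 \<le> u"
  shows "cnt x T b \<le> u + 1 + R a0 b u x T"
proof (induction T)
  case 0 then show ?case using u by (simp add: cnt_def R_def)
next
  case (Suc T)
  have RS: "R a0 b u x (Suc T) = R a0 b u x T + (if Kmax M K \<le> T then (if B1 a0 x T then 1 else 0) + (if B2 a0 b u x T then 1 else 0) else 0)"
    unfolding R_def by (simp add: atLeastLessThanSuc)
  show ?case
  proof (cases "pch x (Suc T) = b")
    case False
    then have "cnt x (Suc T) b = cnt x T b" by (simp add: cnt_Suc)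
    moreover have "R a0 b u x T \<le> R a0 b u x (Suc T)" unfolding RS by auto
    ultimately show ?thesis using Suc.IH by simp
  next
    case True
    have cS: "cnt x (Suc T) b = cnt x T b + 1" using True by (simp add: cnt_Suc)
    from round_cases[OF a0 b True, of u]
    show ?thesis
    proof (elim disjE conjE)
      assume "cnt x T b < u"
      then show ?thesis using cS R_nonneg[of a0 b u x "Suc T"] by simp
    next
      assume "cnt x T b = 0"
      then show ?thesis using cS R_nonneg[of a0 b u x "Suc T"] u by simp
    next
      assume "Kmax M K \<le> T" "B1 a0 x T"
      then have "R a0 b u x (Suc T) \<ge> R a0 b u x T + 1" unfolding RS by auto
      then show ?thesis using cS Suc.IH by simp
    next
      assume "Kmax M K \<le> T" "B2 a0 b u x T"
      then have "R a0 b u x (Suc T) \<ge> R a0 b u x T + 1" unfolding RS by auto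
      then show ?thesis using cS Suc.IH by simp
    qed
  qed
qed

end


lemma sqrt2_facts:
  shows "(2 - sqrt 2)\<^sup>2 * (6 + 4 * sqrt 2) = (4::real)"
    and "(sqrt 2 - 1)\<^sup>2 * (6 + 4 * sqrt 2) = (2::real)"
    and "(2 - sqrt 2) + (sqrt 2 - 1) = (1::real)"
    and "sqrt 2 - 1 \<ge> (0::real)" "2 - sqrt 2 \<ge> (0::real)" "6 + 4 * sqrt 2 > (0::real)"
proof -
  have r: "sqrt 2 * sqrt 2 = (2::real)" by simp
  have r1: "sqrt 2 \<ge> (1::real)" by simp
  have r2: "sqrt 2 \<le> (2::real)"
    by (rule real_le_lsqrt) auto
  show "(2 - sqrt 2)\<^sup>2 * (6 + 4 * sqrt 2) = (4::real)"
    by (simp add: power2_eq_square algebra_simps r)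
  show "(sqrt 2 - 1)\<^sup>2 * (6 + 4 * sqrt 2) = (2::real)"
    by (simp add: power2_eq_square algebra_simps r)
  show "(2 - sqrt 2) + (sqrt 2 - 1) = (1::real)" by simp
  show "sqrt 2 - 1 \<ge> (0::real)" using r1 by simp
  show "2 - sqrt 2 \<ge> (0::real)" using r2 by simp
  show "6 + 4 * sqrt 2 > (0::real)" by (simp add: add_pos_nonneg)
qed

context mucb_prob begin

lemma w_nonneg: "t \<ge> 1 \<Longrightarrow> 0 \<le> n \<Longrightarrow> 0 \<le> w t n"
proof -
  assume t: "t \<ge> 1" and n: "0 \<le> n"
  have "1 \<le> (real t)\<^sup>2" using t by (simp add: one_le_power)
  then have "0 \<le> ln (1 / (1 / (real t)\<^sup>2))" by simp
  then show ?thesis unfolding w_def using n by simp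
qed

lemma w_sq: "t \<ge> 1 \<Longrightarrow> n > 0 \<Longrightarrow> (w t n)\<^sup>2 = 4 * ln t / n"
proof -
  assume t: "t \<ge> 1" and n: "n > 0"
  have "ln (1 / (1 / (real t)\<^sup>2)) = 2 * ln t" using t by (simp add: ln_realpow)
  moreover have "0 \<le> ln (real t)" using t by simp
  ultimately show ?thesis unfolding w_def using n by simp
qed

lemma B1_pred: "Measurable.pred P (\<lambda>\<omega>. B1 a0 (xo \<omega>) t)" if "a0 \<in> A"
proof -
  note [measurable] = ssumP[OF that]
  show ?thesis unfolding B1_def w_def by measurable
qed

lemma B2_pred: "Measurable.pred P (\<lambda>\<omega>. B2 a0 b u (xo \<omega>) t)" if "b \<in> A"
proof -
  note [measurable] = ssumP[OF that]
  show ?thesis unfolding B2_def w_def by measurable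
qed

lemma cnt_cases: "1 \<le> cnt x t a \<Longrightarrow> \<exists>n\<in>{1..t}. cnt x t a = real n"
proof -
  assume c: "1 \<le> cnt x t a"
  obtain n :: nat where n: "cnt x t a = real n" using cnt_nat by blast
  have "real n \<le> t" using cnt_le[of x t a] n by simp
  then show ?thesis using n c by auto
qed

lemma union_bound:
  fixes c :: real
  assumes sub: "\<And>\<omega>. \<omega> \<in> space P \<Longrightarrow> Q \<omega> \<Longrightarrow> \<exists>n\<in>N. \<omega> \<in> E n"
    and fin: "finite N" and E: "\<And>n. n \<in> N \<Longrightarrow> E n \<in> sets P"
    and bnd: "\<And>n. n \<in> N \<Longrightarrow> measure P (E n) \<le> c"
  shows "measure P {\<omega>\<in>space P. Q \<omega>} \<le> real (card N) * c"
proof -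
  have "measure P {\<omega>\<in>space P. Q \<omega>} \<le> measure P (\<Union>n\<in>N. E n)"
    by (rule finite_measure_mono) (use sub E fin in auto)
  also have "\<dots> \<le> (\<Sum>n\<in>N. measure P (E n))"
    by (rule finite_measure_subadditive_finite) (use fin E in auto)
  also have "\<dots> \<le> (\<Sum>n\<in>N. c)" by (rule sum_mono) (rule bnd)
  finally show ?thesis by simp
qed

lemma PB1:
  fixes t :: nat
  assumes a0: "a0 \<in> A" and t: "t \<ge> 1"
  shows "measure P {\<omega>\<in>space P. B1 a0 (xo \<omega>) t} \<le> t * exp (- (8 * ln t))"
proof -
  define E where "E n = {\<omega>\<in>space P. cnt (xo \<omega>) t a0 = real n \<and>
     8 * ln t \<le> (- 4 * w t n) * (ssum (xo \<omega>) t a0 - \<mu> a0 * real n) - (- 4 * w t n)\<^sup>2 / 8 * real n}" for n :: nat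
  have "measure P {\<omega>\<in>space P. B1 a0 (xo \<omega>) t} \<le> real (card {1..t}) * exp (- (8 * ln t))"
  proof (rule union_bound)
    fix \<omega> assume "\<omega> \<in> space P" and B: "B1 a0 (xo \<omega>) t"
    then obtain n where n: "n \<in> {1..t}" "cnt (xo \<omega>) t a0 = real n"
      using cnt_cases unfolding B1_def by blast
    define W where "W = w t n"
    define S where "S = ssum (xo \<omega>) t a0 - \<mu> a0 * real n"
    have np: "real n > 0" using n by simp
    have W0: "0 \<le> W" using w_nonneg[OF t, of "real n"] W_def by simp
    have W2: "W\<^sup>2 * real n = 4 * ln t" using w_sq[OF t np] W_def np by simp
    have "ssum (xo \<omega>) t a0 / real n + W \<le> \<mu> a0" using B n unfolding B1_def W_def by simp
    then have "ssum (xo \<omega>) t a0 \<le> real n * (\<mu> a0 - W)" using np by (simp add: field_simps)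
    then have S: "S \<le> - (real n * W)" unfolding S_def by (simp add: algebra_simps)
    have "4 * W * (real n * W) \<le> 4 * W * (- S)" using S W0 by (intro mult_left_mono) auto
    then have "8 * ln t \<le> (- 4 * W) * S - (- 4 * W)\<^sup>2 / 8 * real n"
      using W2 by (simp add: power2_eq_square algebra_simps)
    then have "\<omega> \<in> E n" unfolding E_def S_def W_def using n \<open>\<omega> \<in> space P\<close> by simp
    then show "\<exists>n\<in>{1..t}. \<omega> \<in> E n" using n by blast
  next
    fix n assume "n \<in> {1..t}"
    note [measurable] = ssumP[OF a0]
    show "E n \<in> sets P" unfolding E_def by measurable
    show "measure P (E n) \<le> exp (- (8 * ln t))" unfolding E_def by (rule tail[OF a0])
  qed simp
  then show ?thesis by simp
qed

lemma PB2:
  fixes t T :: nat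
  assumes a0: "a0 \<in> A" and b: "b \<in> A" and D: "\<mu> b < \<mu> a0" and t: "t \<ge> 1" "t \<le> T"
    and u: "u = (6 + 4 * sqrt 2) * ln T / (\<mu> a0 - \<mu> b)\<^sup>2"
  shows "measure P {\<omega>\<in>space P. B2 a0 b u (xo \<omega>) t} \<le> t * exp (- (4 * ln T))"
proof -
  define \<Delta> where "\<Delta> = \<mu> a0 - \<mu> b"
  define C where "C = (6 + 4 * sqrt 2 :: real)"
  define \<epsilon> where "\<epsilon> = (sqrt 2 - 1) * \<Delta>"
  have Dp: "\<Delta> > 0" using D \<Delta>_def by simp
  have Cp: "C > 0" using sqrt2_facts C_def by simp
  have eps0: "0 \<le> \<epsilon>" using sqrt2_facts Dp \<epsilon>_def by simp
  have lnT: "0 \<le> ln (real T)" using t by simp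
  define E where "E n = {\<omega>\<in>space P. cnt (xo \<omega>) t b = real n \<and>
     4 * ln T \<le> (4 * \<epsilon>) * (ssum (xo \<omega>) t b - \<mu> b * real n) - (4 * \<epsilon>)\<^sup>2 / 8 * real n}" for n :: nat
  have "measure P {\<omega>\<in>space P. B2 a0 b u (xo \<omega>) t} \<le> real (card {1..t}) * exp (- (4 * ln T))"
  proof (rule union_bound)
    fix \<omega> assume "\<omega> \<in> space P" and B: "B2 a0 b u (xo \<omega>) t"
    then obtain n where n: "n \<in> {1..t}" "cnt (xo \<omega>) t b = real n"
      using cnt_cases unfolding B2_def by blast
    define W where "W = w t n"
    define S where "S = ssum (xo \<omega>) t b - \<mu> b * real n"
    have np: "real n > 0" using n by simp
    have W0: "0 \<le> W" using w_nonneg[OF t(1), of "real n"] W_def by simp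
    have W2: "W\<^sup>2 * real n = 4 * ln t" using w_sq[OF t(1) np] W_def np by simp
    have "ln (real t) \<le> ln (real T)" using t by simp
    then have W2': "W\<^sup>2 * real n \<le> 4 * ln T" using W2 by simp
    have nu: "u \<le> real n" using B n unfolding B2_def by simp
    have D2: "\<Delta>\<^sup>2 \<noteq> 0" using Dp by simp
    have "C * ln T = u * \<Delta>\<^sup>2" unfolding u \<Delta>_def[symmetric] C_def[symmetric] using D2 by simp
    also have "\<dots> \<le> real n * \<Delta>\<^sup>2" using nu by (intro mult_right_mono) auto
    finally have nD: "C * ln T \<le> real n * \<Delta>\<^sup>2" .
    have "W\<^sup>2 * real n * C \<le> 4 * (real n * \<Delta>\<^sup>2)"
    proof -
      have "W\<^sup>2 * real n * C \<le> 4 * ln T * C" using W2' Cp by (intro mult_right_mono) auto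
      also have "\<dots> \<le> 4 * (real n * \<Delta>\<^sup>2)" using nD by (simp add: algebra_simps)
      finally show ?thesis .
    qed
    then have "(W\<^sup>2 * C) * real n \<le> (4 * \<Delta>\<^sup>2) * real n" by (simp add: mult_ac)
    then have "W\<^sup>2 * C \<le> 4 * \<Delta>\<^sup>2" by (rule mult_right_le_imp_le[OF _ np])
    also have "4 * \<Delta>\<^sup>2 = ((2 - sqrt 2) * \<Delta>)\<^sup>2 * C"
    proof -
      have "((2 - sqrt 2) * \<Delta>)\<^sup>2 * C = ((2 - sqrt 2)\<^sup>2 * C) * \<Delta>\<^sup>2" by (simp only: power_mult_distrib mult.assoc mult.commute[of C "\<Delta>\<^sup>2"])
      also have "\<dots> = 4 * \<Delta>\<^sup>2" using sqrt2_facts(1) C_def by simp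
      finally show ?thesis by simp
    qed
    finally have "W\<^sup>2 \<le> ((2 - sqrt 2) * \<Delta>)\<^sup>2" by (rule mult_right_le_imp_le[OF _ Cp])
    then have Wle: "W \<le> (2 - sqrt 2) * \<Delta>"
    proof (rule power2_le_imp_le)
      show "0 \<le> (2 - sqrt 2) * \<Delta>" using sqrt2_facts(5) Dp by simp
    qed
    have "\<mu> a0 < ssum (xo \<omega>) t b / real n + W" using B n unfolding B2_def W_def by simp
    then have "real n * (\<mu> a0 - W) < ssum (xo \<omega>) t b" using np by (simp add: field_simps)
    then have "real n * (\<Delta> - W) < S" unfolding S_def \<Delta>_def by (simp add: algebra_simps)
    moreover have "\<epsilon> \<le> \<Delta> - W"
    proof -
      have "(sqrt 2 - 1) * \<Delta> = \<Delta> - (2 - sqrt 2) * \<Delta>" by (simp add: algebra_simps)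
      then show ?thesis using Wle unfolding \<epsilon>_def by linarith
    qed
    ultimately have S: "real n * \<epsilon> \<le> S"
    proof -
      assume h1: "real n * (\<Delta> - W) < S" and h2: "\<epsilon> \<le> \<Delta> - W"
      have "real n * \<epsilon> \<le> real n * (\<Delta> - W)" using h2 np by (intro mult_left_mono) auto
      then show ?thesis using h1 by simp
    qed
    have "2 * ln T \<le> real n * \<epsilon>\<^sup>2"
    proof -
      have "real n * \<epsilon>\<^sup>2 = (sqrt 2 - 1)\<^sup>2 * (real n * \<Delta>\<^sup>2)" unfolding \<epsilon>_def by (simp add: power_mult_distrib mult_ac)
      also have "\<dots> \<ge> (sqrt 2 - 1)\<^sup>2 * (C * ln T)" using nD by (intro mult_left_mono) auto
      also have "(sqrt 2 - 1)\<^sup>2 * (C * ln T) = 2 * ln T" unfolding C_def by (simp only: mult.assoc[symmetric] sqrt2_facts(2))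
      finally show ?thesis by simp
    qed
    moreover have "4 * \<epsilon> * (real n * \<epsilon>) \<le> 4 * \<epsilon> * S" using S eps0 by (intro mult_left_mono) auto
    moreover have "(4 * \<epsilon>)\<^sup>2 / 8 * real n = 2 * (real n * \<epsilon>\<^sup>2)" by (simp add: power2_eq_square)
    moreover have "4 * \<epsilon> * (real n * \<epsilon>) = 4 * (real n * \<epsilon>\<^sup>2)" by (simp add: power2_eq_square)
    ultimately have "4 * ln T \<le> (4 * \<epsilon>) * S - (4 * \<epsilon>)\<^sup>2 / 8 * real n"
      by linarith
    then have "\<omega> \<in> E n" unfolding E_def S_def using n \<open>\<omega> \<in> space P\<close> by simp
    then show "\<exists>n\<in>{1..t}. \<omega> \<in> E n" using n by blast
  next
    fix n assume "n \<in> {1..t}"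
    note [measurable] = ssumP[OF b]
    show "E n \<in> sets P" unfolding E_def by measurable
    show "measure P (E n) \<le> exp (- (4 * ln T))" unfolding E_def by (rule tail[OF b])
  qed simp
  then show ?thesis by simp
qed

end


lemma sum_inv_sq_aux: "(\<Sum>t\<in>{2..<Suc (Suc m)}. 1 / (real t)\<^sup>2) \<le> 1 - 1 / (real m + 1)"
proof (induction m)
  case 0 then show ?case by simp
next
  case (Suc m)
  have "(\<Sum>t\<in>{2..<Suc (Suc (Suc m))}. 1 / (real t)\<^sup>2) = (\<Sum>t\<in>{2..<Suc (Suc m)}. 1 / (real t)\<^sup>2) + 1 / (real m + 2)\<^sup>2"
    by (simp add: atLeastLessThanSuc)
  also have "\<dots> \<le> 1 - 1 / (real m + 1) + 1 / (real m + 2)\<^sup>2" using Suc.IH by simp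
  also have "\<dots> \<le> 1 - 1 / (real (Suc m) + 1)"
  proof -
    have "1 / (real m + 2)\<^sup>2 \<le> 1 / ((real m + 1) * (real m + 2))"
      by (intro divide_left_mono) (auto simp: power2_eq_square intro!: mult_mono)
    also have "\<dots> = 1 / (real m + 1) - 1 / (real m + 2)" by (simp add: field_simps)
    finally show ?thesis by (simp add: add.commute)
  qed
  finally show ?case .
qed

lemma sum_inv_sq: "(\<Sum>t\<in>{2..<N}. 1 / (real t)\<^sup>2) \<le> 1"
proof -
  have "(\<Sum>t\<in>{2..<N}. 1 / (real t)\<^sup>2) \<le> (\<Sum>t\<in>{2..<Suc (Suc N)}. 1 / (real t)\<^sup>2)"
    by (rule sum_mono2) auto
  also have "\<dots> \<le> 1 - 1 / (real N + 1)" by (rule sum_inv_sq_aux)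
  also have "\<dots> \<le> 1" by simp
  finally show ?thesis .
qed

context mucb_prob begin

lemma int_ind:
  assumes "Measurable.pred P Q"
  shows "integral\<^sup>L P (\<lambda>\<omega>. if Q \<omega> then 1 else 0 :: real) = measure P {\<omega>\<in>space P. Q \<omega>}"
proof -
  have "integral\<^sup>L P (\<lambda>\<omega>. if Q \<omega> then 1 else 0 :: real) = integral\<^sup>L P (indicator {\<omega>\<in>space P. Q \<omega>})"
    by (rule Bochner_Integration.integral_cong) (auto simp: indicator_def)
  also have "\<dots> = measure P {\<omega>\<in>space P. Q \<omega>}"
  proof -
    have "{\<omega>\<in>space P. Q \<omega>} \<inter> space P = {\<omega>\<in>space P. Q \<omega>}" by auto
    then show ?thesis by simp
  qed
  finally show ?thesis .
qed

lemma int_ind_integrable: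
  assumes "Measurable.pred P Q"
  shows "integrable P (\<lambda>\<omega>. if Q \<omega> then 1 else 0 :: real)"
proof (rule integrable_const_bound[where B=1])
  show "AE x in P. norm (if Q x then 1 else 0 :: real) \<le> 1" by simp
  show "(\<lambda>\<omega>. if Q \<omega> then 1 else 0 :: real) \<in> borel_measurable P" using assms by measurable
qed

lemma SB1:
  assumes a0: "a0 \<in> A" and K2: "2 \<le> Kmax M K"
  shows "(\<Sum>t\<in>{Kmax M K..<T}. measure P {\<omega>\<in>space P. B1 a0 (xo \<omega>) t}) \<le> 1"
proof -
  have "(\<Sum>t\<in>{Kmax M K..<T}. measure P {\<omega>\<in>space P. B1 a0 (xo \<omega>) t}) \<le> (\<Sum>t\<in>{Kmax M K..<T}. 1 / (real t)\<^sup>2)"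
  proof (rule sum_mono)
    fix t assume t: "t \<in> {Kmax M K..<T}"
    then have t1: "t \<ge> 1" "real t > 0" using K2 by auto
    have "measure P {\<omega>\<in>space P. B1 a0 (xo \<omega>) t} \<le> t * exp (- (8 * ln t))" by (rule PB1[OF a0 t1(1)])
    also have "exp (- (8 * ln (real t))) = 1 / (real t)^8"
    proof -
      have "8 * ln (real t) = ln ((real t)^8)" using t1 by (simp add: ln_realpow)
      then show ?thesis using t1 by (simp add: exp_minus inverse_eq_divide)
    qed
    also have "real t * (1 / (real t)^8) \<le> 1 / (real t)\<^sup>2"
    proof -
      have "real t * (1 / (real t)^8) = 1 / (real t)^7" using t1 by (simp add: power_eq_if)
      also have "\<dots> \<le> 1 / (real t)^2"
        using t1 by (intro divide_left_mono power_increasing) auto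
      finally show ?thesis .
    qed
    finally show "measure P {\<omega>\<in>space P. B1 a0 (xo \<omega>) t} \<le> 1 / (real t)\<^sup>2" by simp
  qed
  also have "\<dots> \<le> (\<Sum>t\<in>{2..<T}. 1 / (real t)\<^sup>2)"
    by (rule sum_mono2) (use K2 in auto)
  also have "\<dots> \<le> 1" by (rule sum_inv_sq)
  finally show ?thesis .
qed

lemma SB2:
  assumes a0: "a0 \<in> A" and b: "b \<in> A" and D: "\<mu> b < \<mu> a0" and K2: "2 \<le> Kmax M K" and T: "T \<ge> 1"
    and u: "u = (6 + 4 * sqrt 2) * ln T / (\<mu> a0 - \<mu> b)\<^sup>2"
  shows "(\<Sum>t\<in>{Kmax M K..<T}. measure P {\<omega>\<in>space P. B2 a0 b u (xo \<omega>) t}) \<le> 1"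
proof -
  have Tp: "real T > 0" using T by simp
  have e: "exp (- (4 * ln (real T))) = 1 / (real T)^4"
  proof -
    have "4 * ln (real T) = ln ((real T)^4)" using Tp by (simp add: ln_realpow)
    then show ?thesis using Tp by (simp add: exp_minus inverse_eq_divide)
  qed
  have "(\<Sum>t\<in>{Kmax M K..<T}. measure P {\<omega>\<in>space P. B2 a0 b u (xo \<omega>) t}) \<le> (\<Sum>t\<in>{Kmax M K..<T}. real T * (1 / (real T)^4))"
  proof (rule sum_mono)
    fix t assume t: "t \<in> {Kmax M K..<T}"
    then have t1: "t \<ge> 1" "t \<le> T" using K2 by auto
    have "measure P {\<omega>\<in>space P. B2 a0 b u (xo \<omega>) t} \<le> t * exp (- (4 * ln T))" by (rule PB2[OF a0 b D t1 u])
    also have "\<dots> \<le> real T * (1 / (real T)^4)" unfolding e using t1 by (intro mult_right_mono) auto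
    finally show "measure P {\<omega>\<in>space P. B2 a0 b u (xo \<omega>) t} \<le> real T * (1 / (real T)^4)" .
  qed
  also have "\<dots> = real (card {Kmax M K..<T}) * (real T * (1 / (real T)^4))" by simp
  also have "\<dots> \<le> real T * (real T * (1 / (real T)^4))"
    by (rule mult_right_mono) auto
  also have "\<dots> = 1 / (real T)\<^sup>2" using Tp by (simp add: power_eq_if field_simps)
  also have "\<dots> \<le> 1" using T by (simp add: one_le_power)
  finally show ?thesis .
qed

lemma Ecnt:
  assumes a0: "a0 \<in> A" and b: "b \<in> A" and D: "\<mu> b < \<mu> a0" and K2: "2 \<le> Kmax M K" and T: "T \<ge> 1"
    and u: "u = (6 + 4 * sqrt 2) * ln T / (\<mu> a0 - \<mu> b)\<^sup>2"
  shows "integral\<^sup>L P (\<lambda>\<omega>. cnt (xo \<omega>) T b) \<le> u + 3"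
proof -
  have u0: "0 \<le> u" unfolding u using T by (intro divide_nonneg_nonneg mult_nonneg_nonneg) (auto simp: add_nonneg_nonneg)
  note [measurable] = B1_pred[OF a0] B2_pred[OF b]
  have iR: "integrable P (\<lambda>\<omega>. (if B1 a0 (xo \<omega>) t then 1 else 0) + (if B2 a0 b u (xo \<omega>) t then 1 else 0) :: real)" for t
    by (intro Bochner_Integration.integrable_add int_ind_integrable) measurable
  have icnt: "integrable P (\<lambda>\<omega>. cnt (xo \<omega>) T b)"
  proof (rule integrable_const_bound[where B="real T"])
    show "AE x in P. norm (cnt (xo x) T b) \<le> real T" using cnt_le cnt_nonneg by simp
  qed measurable
  have iRs: "integrable P (\<lambda>\<omega>. R a0 b u (xo \<omega>) T)"
    unfolding R_def by (rule Bochner_Integration.integrable_sum) (rule iR)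
  have "integral\<^sup>L P (\<lambda>\<omega>. cnt (xo \<omega>) T b) \<le> integral\<^sup>L P (\<lambda>\<omega>. (u + 1) + R a0 b u (xo \<omega>) T)"
  proof (rule integral_mono)
    show "integrable P (\<lambda>\<omega>. (u + 1) + R a0 b u (xo \<omega>) T)"
      by (rule Bochner_Integration.integrable_add[OF _ iRs]) simp
    show "cnt (xo \<omega>) T b \<le> (u + 1) + R a0 b u (xo \<omega>) T" for \<omega>
      using count_bound[OF a0 b u0] by simp
  qed (rule icnt)
  also have "\<dots> = (u + 1) + (\<Sum>t\<in>{Kmax M K..<T}. measure P {\<omega>\<in>space P. B1 a0 (xo \<omega>) t} + measure P {\<omega>\<in>space P. B2 a0 b u (xo \<omega>) t})"
  proof -
    have "integral\<^sup>L P (\<lambda>\<omega>. (u + 1) + R a0 b u (xo \<omega>) T) = (u + 1) + integral\<^sup>L P (\<lambda>\<omega>. R a0 b u (xo \<omega>) T)"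
      by (subst Bochner_Integration.integral_add) (use iRs in \<open>auto simp: prob_space\<close>)
    also have "integral\<^sup>L P (\<lambda>\<omega>. R a0 b u (xo \<omega>) T) = (\<Sum>t\<in>{Kmax M K..<T}. integral\<^sup>L P (\<lambda>\<omega>. (if B1 a0 (xo \<omega>) t then 1 else 0) + (if B2 a0 b u (xo \<omega>) t then 1 else 0) :: real))"
      unfolding R_def by (rule Bochner_Integration.integral_sum) (rule iR)
    also have "\<dots> = (\<Sum>t\<in>{Kmax M K..<T}. measure P {\<omega>\<in>space P. B1 a0 (xo \<omega>) t} + measure P {\<omega>\<in>space P. B2 a0 b u (xo \<omega>) t})"
    proof (rule sum.cong[OF refl])
      fix t
      show "integral\<^sup>L P (\<lambda>\<omega>. (if B1 a0 (xo \<omega>) t then 1 else 0) + (if B2 a0 b u (xo \<omega>) t then 1 else 0) :: real)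
         = measure P {\<omega>\<in>space P. B1 a0 (xo \<omega>) t} + measure P {\<omega>\<in>space P. B2 a0 b u (xo \<omega>) t}"
        by (subst Bochner_Integration.integral_add) (auto intro!: int_ind_integrable simp: int_ind)
    qed
    finally show ?thesis .
  qed
  also have "\<dots> = (u + 1) + (\<Sum>t\<in>{Kmax M K..<T}. measure P {\<omega>\<in>space P. B1 a0 (xo \<omega>) t}) + (\<Sum>t\<in>{Kmax M K..<T}. measure P {\<omega>\<in>space P. B2 a0 b u (xo \<omega>) t})"
    by (simp add: sum.distrib)
  also have "\<dots> \<le> (u + 1) + 1 + 1"
    using SB1[OF a0 K2, of T] SB2[OF a0 b D K2 T u] by linarith
  finally show ?thesis by simp
qed

end


context mucb begin

lemma Kmax_ge2:
  assumes "a \<in> A" "b \<in> A" "a \<noteq> b"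
  shows "2 \<le> Kmax M K"
proof (rule ccontr)
  assume "\<not> 2 \<le> Kmax M K"
  then have K1: "(\<Prod>i<M. K i) \<le> 1" unfolding Kmax_def by simp
  have Ki: "K i = 1" if i: "i < M" for i
  proof -
    have "K i dvd (\<Prod>i<M. K i)" using i by (intro dvd_prodI) auto
    moreover have "(\<Prod>i<M. K i) > 0" using K_pos by (intro prod_pos) auto
    ultimately have "K i \<le> (\<Prod>i<M. K i)" by (rule dvd_imp_le)
    then show ?thesis using K1 K_pos i by force
  qed
  have "a = b"
  proof (rule nth_equalityI)
    show "length a = length b" using assms arm_tuples_length by simp
    fix i assume "i < length a"
    then have i: "i < M" using assms arm_tuples_length by simp
    have "1 \<le> a ! i" "a ! i \<le> K i" "1 \<le> b ! i" "b ! i \<le> K i" using assms(1,2) i by (auto simp: arm_tuples_def)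
    then show "a ! i = b ! i" using Ki[OF i] by simp
  qed
  then show False using assms(3) by simp
qed

end

context mucb_prob begin

lemma X_integrable: "b \<in> A \<Longrightarrow> t \<ge> 1 \<Longrightarrow> integrable P (X b t)"
proof -
  assume b: "b \<in> A" and t: "t \<ge> 1"
  have Xm: "X b t \<in> borel_measurable P" using X_meas b t by auto
  interpret Fb: prob_space "F b" using F_prob b by auto
  have sF: "sets (F b) = sets borel" using F_prob b by auto
  have "integrable (F b) (\<lambda>x. x)"
  proof (rule Fb.integrable_const_bound[where B=1])
    have h: "AE x in F b. 0 \<le> x \<and> x \<le> 1" using F_supp b by blast
    show "AE x in F b. norm x \<le> 1" using h by (rule eventually_mono) auto
    show "(\<lambda>x. x) \<in> borel_measurable (F b)" by (subst measurable_cong_sets[OF sF refl]) measurable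
  qed
  then have "integrable (distr P borel (X b t)) (\<lambda>x. x)" using X_distr b t by simp
  then show "integrable P (X b t)" using integrable_distr_eq[OF Xm, of "\<lambda>x. x"] by simp
qed

lemma X_integral: "b \<in> A \<Longrightarrow> t \<ge> 1 \<Longrightarrow> integral\<^sup>L P (X b t) = \<mu> b"
proof -
  assume b: "b \<in> A" and t: "t \<ge> 1"
  have Xm: "X b t \<in> borel_measurable P" using X_meas b t by auto
  have "integral\<^sup>L P (X b t) = integral\<^sup>L (distr P borel (X b t)) (\<lambda>x. x)"
    using integral_distr[OF Xm, of "\<lambda>x. x"] by simp
  also have "\<dots> = \<mu> b" using X_distr mu_def b t by simp
  finally show ?thesis .
qed

definition pr :: "nat \<Rightarrow> nat list \<Rightarrow> real" where
  "pr t b = measure P {\<omega>\<in>space P. pch (xo \<omega>) t = b}"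

lemma pr_int: "pr t b = integral\<^sup>L P (\<lambda>\<omega>. if pch (xo \<omega>) t = b then 1 else 0)"
  unfolding pr_def by (rule int_ind[symmetric]) measurable

lemma pr_integrable: "integrable P (\<lambda>\<omega>. if pch (xo \<omega>) t = b then 1 else 0 :: real)"
  by (rule int_ind_integrable) measurable

lemma term_int:
  assumes b: "b \<in> A"
  shows "integrable P (\<lambda>\<omega>. (if pch (xo \<omega>) (Suc t) = b then 1 else 0) * X b (Suc t) \<omega>)"
    and "integral\<^sup>L P (\<lambda>\<omega>. (if pch (xo \<omega>) (Suc t) = b then 1 else 0) * X b (Suc t) \<omega>) = pr (Suc t) b * \<mu> b"
proof -
  define f where "f y = (if pch y (Suc t) = b then 1 else 0 :: real)" for y
  define g where "g z = z (Suc t) b" for z :: "nat \<Rightarrow> nat list \<Rightarrow> real"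
  have pm: "(\<lambda>y. pch y (Suc t)) \<in> measurable (Om {1..t}) (count_space UNIV)"
    by (rule pch_meas) auto
  note [measurable] = pm
  have fm: "f \<in> borel_measurable (Om {1..t})" unfolding f_def by measurable
  have gm: "g \<in> borel_measurable (Om {Suc t})" unfolding g_def using coord_meas[of "Suc t" "{Suc t}" b] b by simp
  have ind: "indep_var borel (f \<circ> V {1..t}) borel (g \<circ> V {Suc t})"
    by (rule indep_var_compose[OF indep_V fm gm])
  have e1: "(f \<circ> V {1..t}) \<omega> = (if pch (xo \<omega>) (Suc t) = b then 1 else 0)" for \<omega>
    unfolding f_def comp_def by (subst pch_V) auto
  have e2: "(g \<circ> V {Suc t}) \<omega> = X b (Suc t) \<omega>" for \<omega>
    unfolding g_def comp_def using b by (simp add: V_at)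
  have i1: "integrable P (f \<circ> V {1..t})" unfolding comp_def e1[unfolded comp_def] by (rule pr_integrable)
  have i2: "integrable P (g \<circ> V {Suc t})" unfolding comp_def e2[unfolded comp_def] using X_integrable[OF b] by simp
  have "integrable P (\<lambda>\<omega>. (f \<circ> V {1..t}) \<omega> * (g \<circ> V {Suc t}) \<omega>)"
    by (rule indep_var_integrable[OF ind i1 i2])
  then show "integrable P (\<lambda>\<omega>. (if pch (xo \<omega>) (Suc t) = b then 1 else 0) * X b (Suc t) \<omega>)"
    unfolding e1 e2 .
  have "integral\<^sup>L P (\<lambda>\<omega>. (f \<circ> V {1..t}) \<omega> * (g \<circ> V {Suc t}) \<omega>) = integral\<^sup>L P (f \<circ> V {1..t}) * integral\<^sup>L P (g \<circ> V {Suc t})"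
    by (rule indep_var_lebesgue_integral[OF ind i1 i2])
  then show "integral\<^sup>L P (\<lambda>\<omega>. (if pch (xo \<omega>) (Suc t) = b then 1 else 0) * X b (Suc t) \<omega>) = pr (Suc t) b * \<mu> b"
    unfolding e1 e2 comp_def[symmetric] using X_integral[OF b] pr_int[of "Suc t" b]
    by (simp add: comp_def e1 e2)
qed

lemma Y_split: "X (pch (xo \<omega>) t) t \<omega> = (\<Sum>b\<in>A. (if pch (xo \<omega>) t = b then 1 else 0) * X b t \<omega>)"
proof -
  have "(\<Sum>b\<in>A. (if pch (xo \<omega>) t = b then 1 else 0) * X b t \<omega>) = (\<Sum>b\<in>A. if pch (xo \<omega>) t = b then X b t \<omega> else 0)"
    by (rule sum.cong) auto
  also have "\<dots> = X (pch (xo \<omega>) t) t \<omega>"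
    using sum.delta'[OF A_finite, of "pch (xo \<omega>) t" "\<lambda>b. X b t \<omega>"] pch_in[of "xo \<omega>" t] by simp
  finally show ?thesis by simp
qed

lemma Y_int:
  shows "integrable P (\<lambda>\<omega>. X (pch (xo \<omega>) (Suc t)) (Suc t) \<omega>)"
    and "integral\<^sup>L P (\<lambda>\<omega>. X (pch (xo \<omega>) (Suc t)) (Suc t) \<omega>) = (\<Sum>b\<in>A. pr (Suc t) b * \<mu> b)"
proof -
  show "integrable P (\<lambda>\<omega>. X (pch (xo \<omega>) (Suc t)) (Suc t) \<omega>)"
    unfolding Y_split by (intro Bochner_Integration.integrable_sum term_int(1))
  show "integral\<^sup>L P (\<lambda>\<omega>. X (pch (xo \<omega>) (Suc t)) (Suc t) \<omega>) = (\<Sum>b\<in>A. pr (Suc t) b * \<mu> b)"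
    unfolding Y_split
    by (subst Bochner_Integration.integral_sum) (auto intro: term_int(1) sum.cong simp: term_int(2))
qed

lemma sum_pr: "(\<Sum>b\<in>A. pr t b) = 1"
proof -
  have "(\<Sum>b\<in>A. pr t b) = integral\<^sup>L P (\<lambda>\<omega>. \<Sum>b\<in>A. if pch (xo \<omega>) t = b then 1 else 0 :: real)"
    unfolding pr_int by (subst Bochner_Integration.integral_sum) (auto intro: pr_integrable)
  also have "\<dots> = integral\<^sup>L P (\<lambda>\<omega>. 1)"
  proof (intro Bochner_Integration.integral_cong refl)
    fix \<omega>
    show "(\<Sum>b\<in>A. if pch (xo \<omega>) t = b then 1 else 0 :: real) = 1"
      using sum.delta'[OF A_finite, of "pch (xo \<omega>) t" "\<lambda>b. 1::real"] pch_in[of "xo \<omega>" t] by simp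
  qed
  also have "\<dots> = 1" by (simp add: prob_space)
  finally show ?thesis .
qed

lemma Ecnt_eq: "integral\<^sup>L P (\<lambda>\<omega>. cnt (xo \<omega>) T b) = (\<Sum>t=1..T. pr t b)"
  unfolding cnt_def pr_int
  by (subst Bochner_Integration.integral_sum) (auto intro: pr_integrable)

lemma regret_eq:
  fixes ms :: real
  shows "integral\<^sup>L P (\<lambda>\<omega>. real T * ms - (\<Sum>t=1..T. X (played M K X \<omega> t) t \<omega>))
     = (\<Sum>b\<in>A. (ms - \<mu> b) * integral\<^sup>L P (\<lambda>\<omega>. cnt (xo \<omega>) T b))"
proof -
  have iY: "integrable P (\<lambda>\<omega>. X (pch (xo \<omega>) t) t \<omega>)" if "t \<in> {1..T}" for t
    using that Y_int(1)[of "t - 1"] by simp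
  have EY: "integral\<^sup>L P (\<lambda>\<omega>. X (pch (xo \<omega>) t) t \<omega>) = (\<Sum>b\<in>A. pr t b * \<mu> b)" if "t \<in> {1..T}" for t
    using that Y_int(2)[of "t - 1"] by simp
  have "integral\<^sup>L P (\<lambda>\<omega>. real T * ms - (\<Sum>t=1..T. X (played M K X \<omega> t) t \<omega>))
      = integral\<^sup>L P (\<lambda>\<omega>. real T * ms - (\<Sum>t=1..T. X (pch (xo \<omega>) t) t \<omega>))"
    by (simp add: played_eq)
  also have "\<dots> = real T * ms - (\<Sum>t=1..T. integral\<^sup>L P (\<lambda>\<omega>. X (pch (xo \<omega>) t) t \<omega>))"
    by (subst Bochner_Integration.integral_diff)
       (auto intro!: Bochner_Integration.integrable_sum iY simp: Bochner_Integration.integral_sum iY prob_space)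
  also have "\<dots> = real T * ms - (\<Sum>t=1..T. \<Sum>b\<in>A. pr t b * \<mu> b)"
    using EY by simp
  also have "\<dots> = (\<Sum>t=1..T. \<Sum>b\<in>A. pr t b * (ms - \<mu> b))"
  proof -
    have "(\<Sum>t=1..T. \<Sum>b\<in>A. pr t b * (ms - \<mu> b)) = (\<Sum>t=1..T. ms * (\<Sum>b\<in>A. pr t b) - (\<Sum>b\<in>A. pr t b * \<mu> b))"
      by (simp add: algebra_simps sum_subtractf sum_distrib_left)
    also have "\<dots> = (\<Sum>t=1..T. ms - (\<Sum>b\<in>A. pr t b * \<mu> b))" by (simp add: sum_pr)
    also have "\<dots> = real T * ms - (\<Sum>t=1..T. \<Sum>b\<in>A. pr t b * \<mu> b)" by (simp add: sum_subtractf)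
    finally show ?thesis by simp
  qed
  also have "\<dots> = (\<Sum>b\<in>A. (ms - \<mu> b) * (\<Sum>t=1..T. pr t b))"
    by (subst sum.swap) (simp add: sum_distrib_left mult.commute)
  also have "\<dots> = (\<Sum>b\<in>A. (ms - \<mu> b) * integral\<^sup>L P (\<lambda>\<omega>. cnt (xo \<omega>) T b))"
    by (simp add: Ecnt_eq)
  finally show ?thesis .
qed

end


context mucb_prob begin

lemma term_bound:
  assumes a0: "a0 \<in> A" and b: "b \<in> A" and D: "\<mu> b < \<mu> a0"
  shows "(\<mu> a0 - \<mu> b) * integral\<^sup>L P (\<lambda>\<omega>. cnt (xo \<omega>) T b)
     \<le> 3 * (\<mu> a0 - \<mu> b) + (6 + 4 * sqrt 2) * ln (real T) / (\<mu> a0 - \<mu> b)"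
proof (cases "T = 0")
  case True
  then have "integral\<^sup>L P (\<lambda>\<omega>. cnt (xo \<omega>) T b) = 0" by (simp add: cnt_def)
  then show ?thesis using True D by simp
next
  case False
  then have T: "T \<ge> 1" by simp
  define \<Delta> where "\<Delta> = \<mu> a0 - \<mu> b"
  define u where "u = (6 + 4 * sqrt 2) * ln T / (\<mu> a0 - \<mu> b)\<^sup>2"
  have Dp: "\<Delta> > 0" using D \<Delta>_def by simp
  have K2: "2 \<le> Kmax M K" using Kmax_ge2[OF a0 b] D by auto
  have "\<Delta> * integral\<^sup>L P (\<lambda>\<omega>. cnt (xo \<omega>) T b) \<le> \<Delta> * (u + 3)"
    using Ecnt[OF a0 b D K2 T u_def] Dp by (intro mult_left_mono) auto
  also have "\<Delta> * (u + 3) = 3 * \<Delta> + (6 + 4 * sqrt 2) * ln (real T) / \<Delta>"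
    unfolding u_def \<Delta>_def[symmetric] using Dp by (simp add: power2_eq_square field_simps)
  finally show ?thesis unfolding \<Delta>_def .
qed

lemma main:
  "(let A = arm_tuples M K; \<mu>star = Max (\<mu> ` A); \<Delta> = (\<lambda>a. \<mu>star - \<mu> a) in
          integral\<^sup>L P (\<lambda>\<omega>. real T * \<mu>star - (\<Sum>t=1..T. X (played M K X \<omega> t) t \<omega>))
          \<le> 3 * (\<Sum>a\<in>A. \<Delta> a)
            + (\<Sum>a\<in>{a\<in>A. \<Delta> a > 0}. (6 + 4 * sqrt 2) * ln (real T) / \<Delta> a))"
proof -
  define ms where "ms = Max (\<mu> ` A)"
  have "ms \<in> \<mu> ` A" unfolding ms_def using A_finite A_ne by (intro Max_in) auto
  then obtain a0 where a0: "a0 \<in> A" "\<mu> a0 = ms" by auto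
  have le: "\<mu> b \<le> ms" if "b \<in> A" for b unfolding ms_def using A_finite that by simp
  define C where "C = (6 + 4 * sqrt 2 :: real)"
  have tb: "(ms - \<mu> b) * integral\<^sup>L P (\<lambda>\<omega>. cnt (xo \<omega>) T b)
      \<le> 3 * (ms - \<mu> b) + (if 0 < ms - \<mu> b then C * ln (real T) / (ms - \<mu> b) else 0)" if b: "b \<in> A" for b
  proof (cases "0 < ms - \<mu> b")
    case True
    then show ?thesis using term_bound[OF a0(1) b, of T] a0(2) C_def by simp
  next
    case False
    then have "ms - \<mu> b = 0" using le[OF b] by simp
    then show ?thesis by simp
  qed
  have "integral\<^sup>L P (\<lambda>\<omega>. real T * ms - (\<Sum>t=1..T. X (played M K X \<omega> t) t \<omega>))
      = (\<Sum>b\<in>A. (ms - \<mu> b) * integral\<^sup>L P (\<lambda>\<omega>. cnt (xo \<omega>) T b))"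
    by (rule regret_eq)
  also have "\<dots> \<le> (\<Sum>b\<in>A. 3 * (ms - \<mu> b) + (if 0 < ms - \<mu> b then C * ln (real T) / (ms - \<mu> b) else 0))"
    by (rule sum_mono) (rule tb)
  also have "\<dots> = 3 * (\<Sum>b\<in>A. ms - \<mu> b) + (\<Sum>b\<in>{a\<in>A. ms - \<mu> a > 0}. C * ln (real T) / (ms - \<mu> b))"
    by (simp add: sum.distrib sum_distrib_left sum.inter_filter A_finite)
  finally show ?thesis unfolding Let_def ms_def C_def .
qed

end

theorem theorem1:
  fixes M :: nat and K :: "nat \<Rightarrow> nat"
    and P :: "'w measure"
    and X :: "nat list \<Rightarrow> nat \<Rightarrow> 'w \<Rightarrow> real"
    and F :: "nat list \<Rightarrow> real measure"
    and \<mu> :: "nat list \<Rightarrow> real"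
    and T :: nat
  assumes M_pos: "M \<ge> 1"
    and K_pos: "\<forall>i<M. K i \<ge> 1"
    and P: "prob_space P"
    and F_prob: "\<forall>a\<in>arm_tuples M K. prob_space (F a) \<and> sets (F a) = sets borel"
    and F_supp: "\<forall>a\<in>arm_tuples M K. AE x in F a. 0 \<le> x \<and> x \<le> 1"
    and F_subg: "\<forall>a\<in>arm_tuples M K. subgaussian 1 (F a)"
    and mu_def: "\<forall>a\<in>arm_tuples M K. \<mu> a = integral\<^sup>L (F a) (\<lambda>x. x)"
    and X_meas: "\<forall>a\<in>arm_tuples M K. \<forall>t\<ge>1. X a t \<in> borel_measurable P"
    and X_distr: "\<forall>a\<in>arm_tuples M K. \<forall>t\<ge>1. distr P borel (X a t) = F a"
    and X_indep: "prob_space.indep_vars P (\<lambda>_. PiM (arm_tuples M K) (\<lambda>_. borel))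
                    (\<lambda>t \<omega>. restrict (\<lambda>a. X a t \<omega>) (arm_tuples M K)) {1..}"
  shows "(let A = arm_tuples M K; \<mu>star = Max (\<mu> ` A); \<Delta> = (\<lambda>a. \<mu>star - \<mu> a) in
          integral\<^sup>L P (\<lambda>\<omega>. real T * \<mu>star - (\<Sum>t=1..T. X (played M K X \<omega> t) t \<omega>))
          \<le> 3 * (\<Sum>a\<in>A. \<Delta> a)
            + (\<Sum>a\<in>{a\<in>A. \<Delta> a > 0}. (6 + 4 * sqrt 2) * ln (real T) / \<Delta> a))"
proof -
  interpret mucb_prob M K P X F \<mu>
    unfolding mucb_prob_def mucb_prob_axioms_def mucb_def
    using K_pos P F_prob F_supp mu_def X_meas X_distr X_indep by auto
  show ?thesis by (rule main)
qed


end
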